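(* Assume (R) and (F), and assume $0<q_t<1$ for all $t=0,\dots,T-1$. For $\alpha\in(0,\infty)^T$ let $H_\alpha(Z)$ denote the indifference price of $Z$ for the utilities $u_t(x;\alpha)=\frac{1}{\alpha_t}[1-\exp(-\alpha_tx)]$. Let $Z\in L^\infty$ with representation $Z=\sum_{t=1}^Tz_t1_{(t-1<\tau\le t)}+z_{T+1}1_{(T<\tau)}$ and set $H_\infty(Z)=\max\{z_1,\dots,z_{T+1}\}$. Then: (a) $E[Z]\le H_\alpha(Z)\le H_\infty(Z)$ for all $\alpha\in(0,\infty)^T$; (b) $H_\alpha(Z)\to E[Z]$ as $\alpha\to0+$ (i.e. $\alpha_t\to0+$ for all $t$); (c) $H_\alpha(Z)\to H_\infty(Z)$ as $\alpha\to\infty$ (i.e. $\alpha_t\to\infty$ for all $t$); (d) for every $\pi\in(E[Z],H_\infty(Z))$ and every $\alpha=(\alpha_1,\dots,\alpha_T)\in(0,\infty)^T$ there exists $p\in(0,\infty)$ with $\pi=H_{p\alpha}(Z)$, where $p\alpha=(p\alpha_1,\dots,p\alpha_T)$.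
   Context: Let $T\ge1$, $\mathbb{T}=\{1,\dots,T\}$, and $(\Omega,\mathcal{F},P)$ a probability space carrying a random variable $\tau$ with $\tau(\omega)>0$ for all $\omega$ and $P(\tau=s)=0$ for all $s\in[0,\infty)$. Let $D_t=1_{(\tau\le t)}$ for $t=0,\dots,T$ and $\mathcal{H}_t=\sigma(D_s:s=0,\dots,t)$. Condition (F): the filtration is $\mathcal{F}_t=\mathcal{H}_t$; $L^\infty=L^\infty(\Omega,\mathcal{F}_T,P)$. Condition (R): the interest rates $r_t\ge0$ are deterministic; $B_0=1$, $B_t=\prod_{k=1}^t(1+r_k)$, $\tilde X_t=X_t/B_t$. For $W\in L^\infty$, $\mathcal{A}(W)$ is the set of adapted processes $(Y_t)_{t\in\mathbb{T}}$ with $Y_t\in L^\infty$ and $\sum_t\tilde Y_t=W$ a.s.; $U_\alpha(W)=\sup\{\sum_tE[u_t(\tilde Y_t;\alpha)]:(Y_t)\in\mathcal{A}(W)\}$; the indifference price $H_\alpha(Z)$ (with initial wealth $w$; it does not depend on $w$) is the real number with $U_\alpha(w+H_\alpha(Z)-Z)=U_\alpha(w)$. Let $q_t=P(\tau\le t+1\mid\tau>t)$, $p_t=1-q_t$ for $t=0,\dots,T-1$. *)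

theory Defs
  imports "HOL-Probability.Probability"
begin

text \<open>Default indicator D_s = 1 (tau <= s); the generators of H_t = sigma(D_s : s = 0..t).\<close>
definition default_gen :: "'a measure \<Rightarrow> ('a \<Rightarrow> real) \<Rightarrow> nat \<Rightarrow> 'a set set" where
  "default_gen M \<tau> t = {{\<omega> \<in> space M. \<tau> \<omega> \<le> real s} | s. s \<le> t}"

text \<open>The filtration (F): F_t = H_t, as a measurable space on the sample space.\<close>
definition filt :: "'a measure \<Rightarrow> ('a \<Rightarrow> real) \<Rightarrow> nat \<Rightarrow> 'a measure" where
  "filt M \<tau> t = sigma (space M) (default_gen M \<tau> t)"

definition disc :: "(nat \<Rightarrow> real) \<Rightarrow> nat \<Rightarrow> real" where
  "disc r t = (\<Prod>k\<in>{1..t}. 1 + r k)"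

definition exp_util :: "(nat \<Rightarrow> real) \<Rightarrow> nat \<Rightarrow> real \<Rightarrow> real" where
  "exp_util \<alpha> t x = (1 - exp (- \<alpha> t * x)) / \<alpha> t"

definition admissible ::
  "'a measure \<Rightarrow> ('a \<Rightarrow> real) \<Rightarrow> nat \<Rightarrow> (nat \<Rightarrow> real) \<Rightarrow> ('a \<Rightarrow> real) \<Rightarrow> (nat \<Rightarrow> 'a \<Rightarrow> real) set" where
  "admissible M \<tau> T r W =
     {Y. (\<forall>t\<in>{1..T}. Y t \<in> borel_measurable (filt M \<tau> t)
                       \<and> (\<exists>C. \<forall>\<omega>\<in>space M. \<bar>Y t \<omega>\<bar> \<le> C))
         \<and> (AE \<omega> in M. (\<Sum>t\<in>{1..T}. Y t \<omega> / disc r t) = W \<omega>)}"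

definition value_fun ::
  "'a measure \<Rightarrow> ('a \<Rightarrow> real) \<Rightarrow> nat \<Rightarrow> (nat \<Rightarrow> real) \<Rightarrow> (nat \<Rightarrow> real) \<Rightarrow> ('a \<Rightarrow> real) \<Rightarrow> real" where
  "value_fun M \<tau> T r \<alpha> W =
     Sup {(\<Sum>t\<in>{1..T}. integral\<^sup>L M (\<lambda>\<omega>. exp_util \<alpha> t (Y t \<omega> / disc r t))) | Y. Y \<in> admissible M \<tau> T r W}"

definition indiff_price ::
  "'a measure \<Rightarrow> ('a \<Rightarrow> real) \<Rightarrow> nat \<Rightarrow> (nat \<Rightarrow> real) \<Rightarrow> (nat \<Rightarrow> real) \<Rightarrow> real \<Rightarrow> ('a \<Rightarrow> real) \<Rightarrow> real" where
  "indiff_price M \<tau> T r \<alpha> w Z =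
     (THE h. value_fun M \<tau> T r \<alpha> (\<lambda>\<omega>. w + h - Z \<omega>) = value_fun M \<tau> T r \<alpha> (\<lambda>\<omega>. w))"

definition hazard :: "'a measure \<Rightarrow> ('a \<Rightarrow> real) \<Rightarrow> nat \<Rightarrow> real" where
  "hazard M \<tau> t =
     measure M {\<omega> \<in> space M. real t < \<tau> \<omega> \<and> \<tau> \<omega> \<le> real t + 1}
       / measure M {\<omega> \<in> space M. real t < \<tau> \<omega>}"

definition claim :: "('a \<Rightarrow> real) \<Rightarrow> nat \<Rightarrow> (nat \<Rightarrow> real) \<Rightarrow> 'a \<Rightarrow> real" where
  "claim \<tau> T z \<omega> =
     (\<Sum>t\<in>{1..T}. z t * (if real t - 1 < \<tau> \<omega> \<and> \<tau> \<omega> \<le> real t then 1 else 0))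
     + z (T + 1) * (if real T < \<tau> \<omega> then 1 else 0)"

end

theory Submission imports Defs begin

lemma tangent:
  fixes \<alpha> x :: "nat \<Rightarrow> real"
  assumes fin: "finite I" and pos: "\<forall>t\<in>I. 0 < \<alpha> t" and A: "A = (\<Sum>t\<in>I. 1 / \<alpha> t)" and Ap: "A > 0"
  shows "A * exp (- (\<Sum>t\<in>I. x t) / A) \<le> (\<Sum>t\<in>I. exp (- \<alpha> t * x t) / \<alpha> t)"
proof -
  define s where "s = (\<Sum>t\<in>I. x t)"
  have each: "exp (- s / A) * (1 / \<alpha> t - x t + s / A * (1 / \<alpha> t)) \<le> exp (- \<alpha> t * x t) / \<alpha> t"
    if t: "t \<in> I" for t
  proof -
    have at: "\<alpha> t > 0" using pos t by auto
    have "1 + (- \<alpha> t * x t + s / A) \<le> exp (- \<alpha> t * x t + s / A)" by (rule exp_ge_add_one_self)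
    then have "exp (- s / A) * (1 + (- \<alpha> t * x t + s / A)) \<le> exp (- s / A) * exp (- \<alpha> t * x t + s / A)"
      by (intro mult_left_mono) auto
    also have "\<dots> = exp (- \<alpha> t * x t)" by (simp flip: exp_add)
    finally have "exp (- s / A) * (1 + (- \<alpha> t * x t + s / A)) / \<alpha> t \<le> exp (- \<alpha> t * x t) / \<alpha> t"
      using at by (intro divide_right_mono) auto
    moreover have "exp (- s / A) * (1 + (- \<alpha> t * x t + s / A)) / \<alpha> t
        = exp (- s / A) * (1 / \<alpha> t - x t + s / A * (1 / \<alpha> t))"
      using at by (simp add: field_simps)
    ultimately show ?thesis by simp
  qed
  have "(\<Sum>t\<in>I. exp (- s / A) * (1 / \<alpha> t - x t + s / A * (1 / \<alpha> t)))
      = exp (- s / A) * ((\<Sum>t\<in>I. 1 / \<alpha> t) - s + s / A * (\<Sum>t\<in>I. 1 / \<alpha> t))"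
    unfolding s_def by (simp add: sum_distrib_left sum_subtractf sum.distrib ring_distribs)
  also have "\<dots> = exp (- s / A) * (A - s + s / A * A)" using A by simp
  also have "\<dots> = A * exp (- s / A)" using Ap by simp
  finally have eq: "(\<Sum>t\<in>I. exp (- s / A) * (1 / \<alpha> t - x t + s / A * (1 / \<alpha> t))) = A * exp (- s / A)" .
  have le: "(\<Sum>t\<in>I. exp (- s / A) * (1 / \<alpha> t - x t + s / A * (1 / \<alpha> t))) \<le> (\<Sum>t\<in>I. exp (- \<alpha> t * x t) / \<alpha> t)"
    by (intro sum_mono each)
  from eq le have "A * exp (- s / A) \<le> (\<Sum>t\<in>I. exp (- \<alpha> t * x t) / \<alpha> t)" by simp
  then show ?thesis unfolding s_def by simp
qed

lemma exp_sq_bound: fixes u :: real assumes "\<bar>u\<bar> \<le> 1" shows "exp u \<le> 1 + u + u\<^sup>2"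
proof (cases "u \<ge> 0")
  case True then show ?thesis using exp_bound assms by auto
next
  case False
  define v where "v = - u"
  have v: "0 < v" "v \<le> 1" using False assms v_def by auto
  have "v\<^sup>2 > 0" using v by simp
  then have q: "1 - v + v\<^sup>2 > 0" using v by linarith
  have "1 \<le> (1 + v) * (1 - v + v\<^sup>2)" using v by (simp add: algebra_simps power2_eq_square power3_eq_cube)
  also have "\<dots> \<le> exp v * (1 - v + v\<^sup>2)" using q by (intro mult_right_mono) auto
  finally have "1 / exp v \<le> 1 - v + v\<^sup>2" by (simp add: field_simps)
  then show ?thesis unfolding v_def by (simp add: exp_minus field_simps)
qed

locale setting = prob_space M for M :: "'a measure" +
  fixes \<tau> :: "'a \<Rightarrow> real" and T :: nat and r :: "nat \<Rightarrow> real"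
  assumes tau_meas: "\<tau> \<in> borel_measurable M"
    and T1: "T \<ge> 1"
    and rpos: "\<forall>k\<in>{1..T}. r k \<ge> 0"
begin

lemma gen_sub: "default_gen M \<tau> t \<subseteq> sets M"
  unfolding default_gen_def using tau_meas by (auto intro!: measurable)

lemma gen_pow: "default_gen M \<tau> t \<subseteq> Pow (space M)"
  unfolding default_gen_def by auto

lemma filt_space[simp]: "space (filt M \<tau> t) = space M"
  unfolding filt_def using gen_pow by (simp add: space_measure_of)

lemma filt_sets: "sets (filt M \<tau> t) = sigma_sets (space M) (default_gen M \<tau> t)"
  unfolding filt_def using gen_pow by (simp add: sets_measure_of)

lemma filt_sub: "sets (filt M \<tau> t) \<subseteq> sets M"
  unfolding filt_sets using gen_sub by (rule sets.sigma_sets_subset)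

lemma filt_meas: "f \<in> borel_measurable (filt M \<tau> t) \<Longrightarrow> f \<in> borel_measurable M"
  using measurable_mono[of borel borel "filt M \<tau> t" M] filt_sub by auto

lemma gen_in_filt: "s \<le> t \<Longrightarrow> {\<omega>\<in>space M. \<tau> \<omega> \<le> real s} \<in> sets (filt M \<tau> t)"
  unfolding filt_sets default_gen_def by (rule sigma_sets.Basic) auto

lemma ind_meas: "s \<le> t \<Longrightarrow> (\<lambda>\<omega>. if \<tau> \<omega> \<le> real s then (1::real) else 0) \<in> borel_measurable (filt M \<tau> t)"
  apply (rule measurable_If)
  using gen_in_filt by auto

lemma claim_meas: "claim \<tau> T z \<in> borel_measurable (filt M \<tau> T)"
proof -
  have iv: "{\<omega>\<in>space (filt M \<tau> T). real t - 1 < \<tau> \<omega> \<and> \<tau> \<omega> \<le> real t} \<in> sets (filt M \<tau> T)"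
    if "t \<in> {1..T}" for t
  proof -
    have "{\<omega>\<in>space (filt M \<tau> T). real t - 1 < \<tau> \<omega> \<and> \<tau> \<omega> \<le> real t}
       = {\<omega>\<in>space M. \<tau> \<omega> \<le> real t} - {\<omega>\<in>space M. \<tau> \<omega> \<le> real (t - 1)}"
      using that by auto
    moreover have "{\<omega>\<in>space M. \<tau> \<omega> \<le> real t} \<in> sets (filt M \<tau> T)" 
      "{\<omega>\<in>space M. \<tau> \<omega> \<le> real (t-1)} \<in> sets (filt M \<tau> T)"
      using that gen_in_filt[of t T] gen_in_filt[of "t-1" T] by (auto simp: of_nat_diff)
    ultimately show ?thesis by auto
  qed
  have last: "{\<omega>\<in>space (filt M \<tau> T). real T < \<tau> \<omega>} \<in> sets (filt M \<tau> T)"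
  proof -
    have "{\<omega>\<in>space (filt M \<tau> T). real T < \<tau> \<omega>} = space (filt M \<tau> T) - {\<omega>\<in>space M. \<tau> \<omega> \<le> real T}"
      by auto
    then show ?thesis using gen_in_filt[of T T] sets.compl_sets[of _ "filt M \<tau> T"] by auto
  qed
  show ?thesis
    unfolding claim_def
    apply (intro borel_measurable_add borel_measurable_sum borel_measurable_times measurable_const)
       apply simp
      apply (rule measurable_If) apply simp apply simp using iv apply blast
     apply simp
    apply (rule measurable_If) apply simp apply simp using last by blast
qed


lemma disc_pos: "t \<le> T \<Longrightarrow> disc r t > 0"
  unfolding disc_def
proof (intro prod_pos)
  fix k assume "t \<le> T" "k \<in> {1..t}"
  then have "r k \<ge> 0" using rpos by auto
  then show "0 < 1 + r k" by simp
qed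

definition posa :: "(nat \<Rightarrow> real) \<Rightarrow> bool" where
  "posa \<alpha> \<longleftrightarrow> (\<forall>t\<in>{1..T}. 0 < \<alpha> t)"

definition G :: "(nat \<Rightarrow> real) \<Rightarrow> (nat \<Rightarrow> 'a \<Rightarrow> real) \<Rightarrow> real" where
  "G \<alpha> Y = (\<Sum>t\<in>{1..T}. (\<integral>\<omega>. exp (- \<alpha> t * (Y t \<omega> / disc r t)) \<partial>M) / \<alpha> t)"

definition Asum :: "(nat \<Rightarrow> real) \<Rightarrow> real" where
  "Asum \<alpha> = (\<Sum>t\<in>{1..T}. 1 / \<alpha> t)"

definition D :: "(nat \<Rightarrow> real) \<Rightarrow> ('a \<Rightarrow> real) \<Rightarrow> real" where
  "D \<alpha> W = Inf (G \<alpha> ` admissible M \<tau> T r W)"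

lemma Asum_pos: "posa \<alpha> \<Longrightarrow> Asum \<alpha> > 0"
  unfolding Asum_def posa_def using T1 by (intro sum_pos) auto

lemma intg_bdd: fixes f :: "'a \<Rightarrow> real" shows "f \<in> borel_measurable M \<Longrightarrow> (\<forall>\<omega>\<in>space M. \<bar>f \<omega>\<bar> \<le> C) \<Longrightarrow> integrable M f"
  by (rule integrable_const_bound[where B=C]) auto

lemma adm_D: assumes "Y \<in> admissible M \<tau> T r W" "t \<in> {1..T}"
  shows "Y t \<in> borel_measurable M" "\<exists>C. \<forall>\<omega>\<in>space M. \<bar>Y t \<omega>\<bar> \<le> C"
proof -
  have "Y t \<in> borel_measurable (filt M \<tau> t) \<and> (\<exists>C. \<forall>\<omega>\<in>space M. \<bar>Y t \<omega>\<bar> \<le> C)"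
    using assms unfolding admissible_def by auto
  then show "Y t \<in> borel_measurable M" "\<exists>C. \<forall>\<omega>\<in>space M. \<bar>Y t \<omega>\<bar> \<le> C" using filt_meas by auto
qed

lemma exp_intg: assumes "Y \<in> admissible M \<tau> T r W" "t \<in> {1..T}"
  shows "integrable M (\<lambda>\<omega>. exp (- a * (Y t \<omega> / disc r t)))"
proof -
  obtain C where C: "\<forall>\<omega>\<in>space M. \<bar>Y t \<omega>\<bar> \<le> C" using adm_D[OF assms] by blast
  have dp: "disc r t > 0" using disc_pos assms by auto
  have "\<bar>- a * (Y t \<omega> / disc r t)\<bar> \<le> \<bar>a\<bar> * (C / disc r t)" if "\<omega> \<in> space M" for \<omega>
    using C that dp by (auto simp: abs_mult intro!: mult_left_mono divide_right_mono)
  then have "\<bar>exp (- a * (Y t \<omega> / disc r t))\<bar> \<le> exp (\<bar>a\<bar> * (C / disc r t))" if "\<omega> \<in> space M" for \<omega>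
    using that abs_ge_self order_trans by (metis abs_exp_cancel exp_le_cancel_iff)
  then show ?thesis
    using adm_D[OF assms] by (intro intg_bdd[where C="exp (\<bar>a\<bar> * (C / disc r t))"]) auto
qed

lemma G_nonneg: "posa \<alpha> \<Longrightarrow> G \<alpha> Y \<ge> 0"
  unfolding G_def posa_def by (intro sum_nonneg divide_nonneg_pos) auto

lemma value_fun_eq:
  assumes "posa \<alpha>" "admissible M \<tau> T r W \<noteq> {}"
  shows "value_fun M \<tau> T r \<alpha> W = Asum \<alpha> - D \<alpha> W"
proof -
  let ?S = "G \<alpha> ` admissible M \<tau> T r W"
  have eq: "(\<Sum>t\<in>{1..T}. integral\<^sup>L M (\<lambda>\<omega>. exp_util \<alpha> t (Y t \<omega> / disc r t))) = Asum \<alpha> - G \<alpha> Y"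
    if Y: "Y \<in> admissible M \<tau> T r W" for Y
  proof -
    have "integral\<^sup>L M (\<lambda>\<omega>. exp_util \<alpha> t (Y t \<omega> / disc r t))
        = 1 / \<alpha> t - (\<integral>\<omega>. exp (- \<alpha> t * (Y t \<omega> / disc r t)) \<partial>M) / \<alpha> t" if t: "t \<in> {1..T}" for t
    proof -
      have "integral\<^sup>L M (\<lambda>\<omega>. exp_util \<alpha> t (Y t \<omega> / disc r t))
          = (\<integral>\<omega>. 1 - exp (- \<alpha> t * (Y t \<omega> / disc r t)) \<partial>M) / \<alpha> t"
        unfolding exp_util_def by simp
      also have "\<dots> = (1 - (\<integral>\<omega>. exp (- \<alpha> t * (Y t \<omega> / disc r t)) \<partial>M)) / \<alpha> t"
        using exp_intg[OF Y t] by (simp add: prob_space)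
      finally show ?thesis by (simp add: diff_divide_distrib)
    qed
    then show ?thesis unfolding G_def Asum_def by (simp add: sum_subtractf)
  qed
  have img: "{(\<Sum>t\<in>{1..T}. integral\<^sup>L M (\<lambda>\<omega>. exp_util \<alpha> t (Y t \<omega> / disc r t))) | Y. Y \<in> admissible M \<tau> T r W}
      = (\<lambda>g. Asum \<alpha> - g) ` ?S"
    unfolding Setcompr_eq_image image_image using eq by (intro image_cong) auto
  have ne: "?S \<noteq> {}" using assms by auto
  have bdd: "bdd_below ?S" using G_nonneg[OF assms(1)] by (intro bdd_belowI[where m=0]) auto
  have "Sup ((\<lambda>g. Asum \<alpha> - g) ` ?S) = Asum \<alpha> - Inf ?S"
  proof (rule antisym)
    show "Sup ((\<lambda>g. Asum \<alpha> - g) ` ?S) \<le> Asum \<alpha> - Inf ?S"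
      using ne by (intro cSup_least) (auto intro!: cInf_lower[OF _ bdd])
    have ba: "bdd_above ((\<lambda>g. Asum \<alpha> - g) ` ?S)"
      using bdd by (intro bdd_aboveI[where M="Asum \<alpha> - Inf ?S"]) (auto intro!: cInf_lower[OF _ bdd])
    have "Asum \<alpha> - Sup ((\<lambda>g. Asum \<alpha> - g) ` ?S) \<le> Inf ?S"
    proof (rule cInf_greatest[OF ne])
      fix g assume "g \<in> ?S"
      then have "Asum \<alpha> - g \<le> Sup ((\<lambda>g. Asum \<alpha> - g) ` ?S)" using ba by (intro cSup_upper) auto
      then show "Asum \<alpha> - Sup ((\<lambda>g. Asum \<alpha> - g) ` ?S) \<le> g" by simp
    qed
    then show "Asum \<alpha> - Inf ?S \<le> Sup ((\<lambda>g. Asum \<alpha> - g) ` ?S)" by simp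
  qed
  then show ?thesis unfolding value_fun_def D_def img by simp
qed


lemma shift_adm:
  assumes Y: "Y \<in> admissible M \<tau> T r W" and Dm: "\<Delta> \<in> borel_measurable (filt M \<tau> T)"
    and Db: "\<forall>\<omega>\<in>space M. \<bar>\<Delta> \<omega>\<bar> \<le> K"
    and W': "\<forall>\<omega>\<in>space M. W' \<omega> = W \<omega> + (\<Sum>t\<in>{1..T}. a t) + \<Delta> \<omega>"
  shows "(\<lambda>t \<omega>. Y t \<omega> + disc r t * (a t + (if t = T then \<Delta> \<omega> else 0))) \<in> admissible M \<tau> T r W'"
proof -
  let ?Y = "(\<lambda>t \<omega>. Y t \<omega> + disc r t * (a t + (if t = T then \<Delta> \<omega> else 0)))"
  have part1: "?Y t \<in> borel_measurable (filt M \<tau> t) \<and> (\<exists>C. \<forall>\<omega>\<in>space M. \<bar>?Y t \<omega>\<bar> \<le> C)"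
    if t: "t \<in> {1..T}" for t
  proof -
    have ym: "Y t \<in> borel_measurable (filt M \<tau> t)" and "\<exists>C. \<forall>\<omega>\<in>space M. \<bar>Y t \<omega>\<bar> \<le> C"
      using Y t unfolding admissible_def by auto
    then obtain C where C: "\<forall>\<omega>\<in>space M. \<bar>Y t \<omega>\<bar> \<le> C" by blast
    have dp: "disc r t > 0" using disc_pos t by auto
    have m: "?Y t \<in> borel_measurable (filt M \<tau> t)"
    proof (cases "t = T")
      case True
      then show ?thesis using ym Dm by (simp add: borel_measurable_add borel_measurable_times)
    next
      case False
      then show ?thesis using ym by simp
    qed
    have "\<bar>?Y t \<omega>\<bar> \<le> C + disc r t * (\<bar>a t\<bar> + K)" if "\<omega> \<in> space M" for \<omega>
    proof -
      have "\<bar>a t + (if t = T then \<Delta> \<omega> else 0)\<bar> \<le> \<bar>a t\<bar> + K"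
        using Db that by (auto intro: order_trans[OF abs_triangle_ineq])
      then have "\<bar>disc r t * (a t + (if t = T then \<Delta> \<omega> else 0))\<bar> \<le> disc r t * (\<bar>a t\<bar> + K)"
        using dp by (simp add: abs_mult)
      then show ?thesis using C that by (smt (verit))
    qed
    then show ?thesis using m by blast
  qed
  have ae: "AE \<omega> in M. (\<Sum>t\<in>{1..T}. ?Y t \<omega> / disc r t) = W' \<omega>"
  proof -
    have "AE \<omega> in M. (\<Sum>t\<in>{1..T}. Y t \<omega> / disc r t) = W \<omega>" using Y unfolding admissible_def by auto
    then show ?thesis using AE_space
    proof eventually_elim
      case (elim \<omega>)
      then have w: "\<omega> \<in> space M" and e: "(\<Sum>t\<in>{1..T}. Y t \<omega> / disc r t) = W \<omega>" by auto
      have "(\<Sum>t\<in>{1..T}. ?Y t \<omega> / disc r t)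
          = (\<Sum>t\<in>{1..T}. Y t \<omega> / disc r t + a t + (if t = T then \<Delta> \<omega> else 0))"
      proof (intro sum.cong refl)
        fix t assume "t \<in> {1..T}"
        then have "disc r t > 0" using disc_pos by auto
        then show "?Y t \<omega> / disc r t = Y t \<omega> / disc r t + a t + (if t = T then \<Delta> \<omega> else 0)"
          by (simp add: field_simps)
      qed
      also have "\<dots> = W \<omega> + (\<Sum>t\<in>{1..T}. a t) + \<Delta> \<omega>"
        using e T1 by (simp add: sum.distrib)
      finally show "(\<Sum>t\<in>{1..T}. ?Y t \<omega> / disc r t) = W' \<omega>" using W' w by simp
    qed
  qed
  show ?thesis unfolding admissible_def using part1 ae by blast
qed

lemma G_shift:
  "G \<alpha> (\<lambda>t \<omega>. Y t \<omega> + disc r t * (a t + (if t = T then \<Delta> \<omega> else 0)))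
   = (\<Sum>t\<in>{1..T}. exp (- \<alpha> t * a t) *
        (\<integral>\<omega>. exp (- \<alpha> t * (Y t \<omega> / disc r t) - \<alpha> t * (if t = T then \<Delta> \<omega> else 0)) \<partial>M) / \<alpha> t)"
  unfolding G_def
proof (intro sum.cong refl)
  fix t assume t: "t \<in> {1..T}"
  have dp: "disc r t > 0" using disc_pos t by auto
  have "(\<lambda>\<omega>. exp (- \<alpha> t * ((Y t \<omega> + disc r t * (a t + (if t = T then \<Delta> \<omega> else 0))) / disc r t)))
      = (\<lambda>\<omega>. exp (- \<alpha> t * a t) * exp (- \<alpha> t * (Y t \<omega> / disc r t) - \<alpha> t * (if t = T then \<Delta> \<omega> else 0)))"
    using dp by (auto simp: field_simps simp flip: exp_add)
  then show "(\<integral>\<omega>. exp (- \<alpha> t * ((Y t \<omega> + disc r t * (a t + (if t = T then \<Delta> \<omega> else 0))) / disc r t)) \<partial>M) / \<alpha> t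
     = exp (- \<alpha> t * a t) * (\<integral>\<omega>. exp (- \<alpha> t * (Y t \<omega> / disc r t) - \<alpha> t * (if t = T then \<Delta> \<omega> else 0)) \<partial>M) / \<alpha> t"
    by simp
qed


lemma exp_bdd_intg: fixes f :: "'a \<Rightarrow> real"
  assumes "f \<in> borel_measurable M" "\<forall>\<omega>\<in>space M. \<bar>f \<omega>\<bar> \<le> C"
  shows "integrable M (\<lambda>\<omega>. exp (f \<omega>))"
  using assms by (intro intg_bdd[where C="exp C"]) auto

lemma Ydisc_bdd: assumes "Y \<in> admissible M \<tau> T r W" "t \<in> {1..T}"
  shows "\<exists>C. \<forall>\<omega>\<in>space M. \<bar>Y t \<omega> / disc r t\<bar> \<le> C"
proof -
  obtain C where C: "\<forall>\<omega>\<in>space M. \<bar>Y t \<omega>\<bar> \<le> C" using adm_D[OF assms] by blast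
  have dp: "disc r t > 0" using disc_pos assms by auto
  show ?thesis using C dp by (intro exI[of _ "C / disc r t"]) (auto simp: abs_div intro: divide_right_mono)
qed

lemma D_le: "posa \<alpha> \<Longrightarrow> Y \<in> admissible M \<tau> T r W \<Longrightarrow> D \<alpha> W \<le> G \<alpha> Y"
  unfolding D_def using G_nonneg by (intro cInf_lower bdd_belowI[where m=0]) auto

lemma D_ge: "admissible M \<tau> T r W \<noteq> {} \<Longrightarrow> (\<And>Y. Y \<in> admissible M \<tau> T r W \<Longrightarrow> c \<le> G \<alpha> Y) \<Longrightarrow> c \<le> D \<alpha> W"
  unfolding D_def by (intro cInf_greatest) auto

lemma D_shift:
  assumes pa: "posa \<alpha>" and ne: "admissible M \<tau> T r W \<noteq> {}"
    and Dm: "\<Delta> \<in> borel_measurable (filt M \<tau> T)" and Db: "\<forall>\<omega>\<in>space M. \<bar>\<Delta> \<omega>\<bar> \<le> K"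
    and Dnn: "\<forall>\<omega>\<in>space M. \<Delta> \<omega> \<ge> 0"
    and W': "\<forall>\<omega>\<in>space M. W' \<omega> = W \<omega> + c + \<Delta> \<omega>"
  shows "D \<alpha> W' \<le> exp (- c / Asum \<alpha>) * D \<alpha> W" "admissible M \<tau> T r W' \<noteq> {}"
proof -
  define A where "A = Asum \<alpha>"
  have Ap: "A > 0" using Asum_pos[OF pa] A_def by simp
  define a where "a t = c / (\<alpha> t * A)" for t
  have suma: "(\<Sum>t\<in>{1..T}. a t) = c"
  proof -
    have "(\<Sum>t\<in>{1..T}. a t) = c / A * (\<Sum>t\<in>{1..T}. 1 / \<alpha> t)"
      unfolding a_def sum_distrib_left by (intro sum.cong) (auto simp: field_simps)
    then show ?thesis using Ap unfolding A_def Asum_def by simp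
  qed
  have W'': "\<forall>\<omega>\<in>space M. W' \<omega> = W \<omega> + (\<Sum>t\<in>{1..T}. a t) + \<Delta> \<omega>" using W' suma by simp
  have Dm': "\<Delta> \<in> borel_measurable M" using filt_meas Dm by auto
  have key: "exp (c / A) * D \<alpha> W' \<le> G \<alpha> Y" if Y: "Y \<in> admissible M \<tau> T r W" for Y
  proof -
    let ?Y = "\<lambda>t \<omega>. Y t \<omega> + disc r t * (a t + (if t = T then \<Delta> \<omega> else 0))"
    have Y': "?Y \<in> admissible M \<tau> T r W'" by (rule shift_adm[OF Y Dm Db W''])
    have "G \<alpha> ?Y \<le> (\<Sum>t\<in>{1..T}. exp (- c / A) * (\<integral>\<omega>. exp (- \<alpha> t * (Y t \<omega> / disc r t)) \<partial>M) / \<alpha> t)"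
      unfolding G_shift
    proof (intro sum_mono)
      fix t assume t: "t \<in> {1..T}"
      have at: "\<alpha> t > 0" using pa t unfolding posa_def by auto
      have ea: "exp (- \<alpha> t * a t) = exp (- c / A)" using at Ap unfolding a_def by (simp add: field_simps)
      obtain C where C: "\<forall>\<omega>\<in>space M. \<bar>Y t \<omega> / disc r t\<bar> \<le> C" using Ydisc_bdd[OF Y t] by blast
      have ym: "Y t \<in> borel_measurable M" using adm_D[OF Y t] by auto
      have i1: "integrable M (\<lambda>\<omega>. exp (- \<alpha> t * (Y t \<omega> / disc r t) - \<alpha> t * (if t = T then \<Delta> \<omega> else 0)))"
      proof (rule exp_bdd_intg[where C="\<alpha> t * C + \<alpha> t * K"])
        show "(\<lambda>\<omega>. - \<alpha> t * (Y t \<omega> / disc r t) - \<alpha> t * (if t = T then \<Delta> \<omega> else 0)) \<in> borel_measurable M"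
          using ym Dm' by measurable
        show "\<forall>\<omega>\<in>space M. \<bar>- \<alpha> t * (Y t \<omega> / disc r t) - \<alpha> t * (if t = T then \<Delta> \<omega> else 0)\<bar> \<le> \<alpha> t * C + \<alpha> t * K"
        proof
          fix \<omega> assume w: "\<omega> \<in> space M"
          have "\<bar>\<alpha> t * (Y t \<omega> / disc r t)\<bar> = \<alpha> t * \<bar>Y t \<omega> / disc r t\<bar>" using at by (simp add: abs_mult)
          also have "\<dots> \<le> \<alpha> t * C" using C w at by (intro mult_left_mono) auto
          finally have "\<bar>\<alpha> t * (Y t \<omega> / disc r t)\<bar> \<le> \<alpha> t * C" .
          moreover have "\<bar>\<alpha> t * (if t = T then \<Delta> \<omega> else 0)\<bar> \<le> \<alpha> t * K"
            using Db w at Dnn order_trans[OF abs_ge_zero, of "\<Delta> \<omega>" K] by (auto simp: abs_mult)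
          ultimately show "\<bar>- \<alpha> t * (Y t \<omega> / disc r t) - \<alpha> t * (if t = T then \<Delta> \<omega> else 0)\<bar> \<le> \<alpha> t * C + \<alpha> t * K"
            by (smt (verit) mult_minus_left)
        qed
      qed
      have i2: "integrable M (\<lambda>\<omega>. exp (- \<alpha> t * (Y t \<omega> / disc r t)))" using exp_intg[OF Y t] by simp
      have "(\<integral>\<omega>. exp (- \<alpha> t * (Y t \<omega> / disc r t) - \<alpha> t * (if t = T then \<Delta> \<omega> else 0)) \<partial>M)
          \<le> (\<integral>\<omega>. exp (- \<alpha> t * (Y t \<omega> / disc r t)) \<partial>M)"
        using i1 i2 Dnn at by (intro integral_mono) (auto simp: mult_nonneg_nonneg)
      then show "exp (- \<alpha> t * a t) * (\<integral>\<omega>. exp (- \<alpha> t * (Y t \<omega> / disc r t) - \<alpha> t * (if t = T then \<Delta> \<omega> else 0)) \<partial>M) / \<alpha> t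
          \<le> exp (- c / A) * (\<integral>\<omega>. exp (- \<alpha> t * (Y t \<omega> / disc r t)) \<partial>M) / \<alpha> t"
        unfolding ea using at by (intro divide_right_mono mult_left_mono) auto
    qed
    also have "\<dots> = exp (- c / A) * G \<alpha> Y" unfolding G_def sum_distrib_left by (simp add: field_simps)
    finally have "G \<alpha> ?Y \<le> exp (- c / A) * G \<alpha> Y" .
    moreover have "D \<alpha> W' \<le> G \<alpha> ?Y" by (rule D_le[OF pa Y'])
    ultimately have "D \<alpha> W' \<le> exp (- c / A) * G \<alpha> Y" by simp
    then have "exp (c / A) * D \<alpha> W' \<le> exp (c / A) * (exp (- c / A) * G \<alpha> Y)" by (intro mult_left_mono) auto
    also have "\<dots> = G \<alpha> Y" by (simp add: mult.assoc[symmetric] flip: exp_add)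
    finally show ?thesis .
  qed
  have "exp (c / A) * D \<alpha> W' \<le> D \<alpha> W" using key ne by (intro D_ge) auto
  then have "exp (- c / A) * (exp (c / A) * D \<alpha> W') \<le> exp (- c / A) * D \<alpha> W" by (intro mult_left_mono) auto
  then show "D \<alpha> W' \<le> exp (- c / Asum \<alpha>) * D \<alpha> W" unfolding A_def by (simp add: mult.assoc[symmetric] flip: exp_add)
  from ne obtain Y where "Y \<in> admissible M \<tau> T r W" by auto
  from shift_adm[OF this Dm Db W''] show "admissible M \<tau> T r W' \<noteq> {}" by auto
qed


lemma adm0: "(\<lambda>t \<omega>. 0) \<in> admissible M \<tau> T r (\<lambda>\<omega>. 0)"
  unfolding admissible_def by auto

lemma G0: "G \<alpha> (\<lambda>t \<omega>. 0) = Asum \<alpha>"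
  unfolding G_def Asum_def by (simp add: prob_space)

lemma D_shift_eq:
  assumes pa: "posa \<alpha>" and ne: "admissible M \<tau> T r W \<noteq> {}"
    and W': "\<forall>\<omega>\<in>space M. W' \<omega> = W \<omega> + c"
  shows "D \<alpha> W' = exp (- c / Asum \<alpha>) * D \<alpha> W" "admissible M \<tau> T r W' \<noteq> {}"
proof -
  have z: "(\<lambda>\<omega>. 0::real) \<in> borel_measurable (filt M \<tau> T)" by simp
  have W1: "\<forall>\<omega>\<in>space M. W' \<omega> = W \<omega> + c + 0" using W' by simp
  note s1 = D_shift[OF pa ne z _ _ W1, of 0]
  have W2: "\<forall>\<omega>\<in>space M. W \<omega> = W' \<omega> + (- c) + 0" using W' by simp
  note s2 = D_shift[OF pa s1(2) z _ _ W2, of 0]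
  show "admissible M \<tau> T r W' \<noteq> {}" using s1 by simp
  have a: "D \<alpha> W' \<le> exp (- c / Asum \<alpha>) * D \<alpha> W" using s1 by simp
  have "D \<alpha> W \<le> exp (c / Asum \<alpha>) * D \<alpha> W'" using s2 by simp
  then have "exp (- c / Asum \<alpha>) * D \<alpha> W \<le> exp (- c / Asum \<alpha>) * (exp (c / Asum \<alpha>) * D \<alpha> W')"
    by (intro mult_left_mono) auto
  also have "\<dots> = D \<alpha> W'" by (simp add: mult.assoc[symmetric] flip: exp_add)
  finally show "D \<alpha> W' = exp (- c / Asum \<alpha>) * D \<alpha> W" using a by simp
qed

lemma D_lower:
  assumes pa: "posa \<alpha>" and ne: "admissible M \<tau> T r W \<noteq> {}"
    and Wm: "W \<in> borel_measurable M" and Wb: "\<forall>\<omega>\<in>space M. \<bar>W \<omega>\<bar> \<le> K"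
  shows "Asum \<alpha> * (\<integral>\<omega>. exp (- W \<omega> / Asum \<alpha>) \<partial>M) \<le> D \<alpha> W"
proof (rule D_ge[OF ne])
  define A where "A = Asum \<alpha>"
  have Ap: "A > 0" using Asum_pos[OF pa] A_def by simp
  fix Y assume Y: "Y \<in> admissible M \<tau> T r W"
  have at: "\<And>t. t \<in> {1..T} \<Longrightarrow> \<alpha> t > 0" using pa unfolding posa_def by auto
  have ints: "\<And>t. t \<in> {1..T} \<Longrightarrow> integrable M (\<lambda>\<omega>. exp (- \<alpha> t * (Y t \<omega> / disc r t)) / \<alpha> t)"
    using exp_intg[OF Y] by auto
  have "G \<alpha> Y = (\<integral>\<omega>. (\<Sum>t\<in>{1..T}. exp (- \<alpha> t * (Y t \<omega> / disc r t)) / \<alpha> t) \<partial>M)"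
    unfolding G_def by (subst Bochner_Integration.integral_sum[OF ints]) auto
  moreover have "(\<integral>\<omega>. A * exp (- W \<omega> / A) \<partial>M) \<le> (\<integral>\<omega>. (\<Sum>t\<in>{1..T}. exp (- \<alpha> t * (Y t \<omega> / disc r t)) / \<alpha> t) \<partial>M)"
  proof (rule integral_mono_AE)
    have "(\<lambda>\<omega>. - W \<omega> / A) \<in> borel_measurable M" using Wm by measurable
    moreover have "\<forall>\<omega>\<in>space M. \<bar>- W \<omega> / A\<bar> \<le> K / A" using Wb Ap by (auto simp: abs_div intro: divide_right_mono)
    ultimately have "integrable M (\<lambda>\<omega>. exp (- W \<omega> / A))" by (rule exp_bdd_intg)
    then show "integrable M (\<lambda>\<omega>. A * exp (- W \<omega> / A))" by simp
    show "integrable M (\<lambda>\<omega>. \<Sum>t\<in>{1..T}. exp (- \<alpha> t * (Y t \<omega> / disc r t)) / \<alpha> t)"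
      using ints by (intro Bochner_Integration.integrable_sum) auto
    have "AE \<omega> in M. (\<Sum>t\<in>{1..T}. Y t \<omega> / disc r t) = W \<omega>" using Y unfolding admissible_def by auto
    then show "AE \<omega> in M. A * exp (- W \<omega> / A) \<le> (\<Sum>t\<in>{1..T}. exp (- \<alpha> t * (Y t \<omega> / disc r t)) / \<alpha> t)"
    proof (rule eventually_mono)
      fix \<omega> assume e: "(\<Sum>t\<in>{1..T}. Y t \<omega> / disc r t) = W \<omega>"
      have "A * exp (- (\<Sum>t\<in>{1..T}. Y t \<omega> / disc r t) / A) \<le> (\<Sum>t\<in>{1..T}. exp (- \<alpha> t * (Y t \<omega> / disc r t)) / \<alpha> t)"
        using at Ap unfolding A_def Asum_def by (intro tangent) auto
      then show "A * exp (- W \<omega> / A) \<le> (\<Sum>t\<in>{1..T}. exp (- \<alpha> t * (Y t \<omega> / disc r t)) / \<alpha> t)"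
        using e by simp
    qed
  qed
  ultimately show "Asum \<alpha> * (\<integral>\<omega>. exp (- W \<omega> / Asum \<alpha>) \<partial>M) \<le> G \<alpha> Y" unfolding A_def by simp
qed

lemma jensen_exp: fixes f :: "'a \<Rightarrow> real"
  assumes fm: "f \<in> borel_measurable M" and fb: "\<forall>\<omega>\<in>space M. \<bar>f \<omega>\<bar> \<le> C"
  shows "exp (\<integral>\<omega>. f \<omega> \<partial>M) \<le> (\<integral>\<omega>. exp (f \<omega>) \<partial>M)"
proof -
  define m where "m = (\<integral>\<omega>. f \<omega> \<partial>M)"
  have fi: "integrable M f" by (rule intg_bdd[OF fm fb])
  have ei: "integrable M (\<lambda>\<omega>. exp (f \<omega>))" by (rule exp_bdd_intg[OF fm fb])
  have pw: "exp m * (1 + (f \<omega> - m)) \<le> exp (f \<omega>)" for \<omega>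
  proof -
    have "exp m * (1 + (f \<omega> - m)) \<le> exp m * exp (f \<omega> - m)" by (intro mult_left_mono) auto
    then show ?thesis by (simp flip: exp_add)
  qed
  have "(\<integral>\<omega>. exp m * (1 + (f \<omega> - m)) \<partial>M) \<le> (\<integral>\<omega>. exp (f \<omega>) \<partial>M)"
    using fi ei pw by (intro integral_mono) auto
  moreover have "(\<integral>\<omega>. exp m * (1 + (f \<omega> - m)) \<partial>M) = exp m"
  proof -
    have "(\<integral>\<omega>. 1 + (f \<omega> - m) \<partial>M) = 1 + (m - m)"
      using fi unfolding m_def by (simp add: prob_space)
    then show ?thesis by simp
  qed
  ultimately show ?thesis unfolding m_def by simp
qed

lemma adm_scale: assumes "Y \<in> admissible M \<tau> T r W"
  shows "(\<lambda>t \<omega>. p * Y t \<omega>) \<in> admissible M \<tau> T r (\<lambda>\<omega>. p * W \<omega>)"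
proof -
  have a: "\<forall>t\<in>{1..T}. Y t \<in> borel_measurable (filt M \<tau> t) \<and> (\<exists>C. \<forall>\<omega>\<in>space M. \<bar>Y t \<omega>\<bar> \<le> C)"
    and ae: "AE \<omega> in M. (\<Sum>t\<in>{1..T}. Y t \<omega> / disc r t) = W \<omega>"
    using assms unfolding admissible_def by auto
  have b: "\<forall>t\<in>{1..T}. (\<lambda>\<omega>. p * Y t \<omega>) \<in> borel_measurable (filt M \<tau> t) \<and> (\<exists>C. \<forall>\<omega>\<in>space M. \<bar>p * Y t \<omega>\<bar> \<le> C)"
  proof
    fix t assume "t \<in> {1..T}"
    then obtain C where m: "Y t \<in> borel_measurable (filt M \<tau> t)" and C: "\<forall>\<omega>\<in>space M. \<bar>Y t \<omega>\<bar> \<le> C" using a by blast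
    have "\<forall>\<omega>\<in>space M. \<bar>p * Y t \<omega>\<bar> \<le> \<bar>p\<bar> * C" using C by (auto simp: abs_mult intro: mult_left_mono)
    then show "(\<lambda>\<omega>. p * Y t \<omega>) \<in> borel_measurable (filt M \<tau> t) \<and> (\<exists>C. \<forall>\<omega>\<in>space M. \<bar>p * Y t \<omega>\<bar> \<le> C)"
      using m by auto
  qed
  have "AE \<omega> in M. (\<Sum>t\<in>{1..T}. p * Y t \<omega> / disc r t) = p * W \<omega>"
  proof (rule eventually_mono[OF ae])
    fix x assume "(\<Sum>t\<in>{1..T}. Y t x / disc r t) = W x"
    moreover have "(\<Sum>t\<in>{1..T}. p * Y t x / disc r t) = p * (\<Sum>t\<in>{1..T}. Y t x / disc r t)"
      by (simp add: sum_distrib_left)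
    ultimately show "(\<Sum>t\<in>{1..T}. p * Y t x / disc r t) = p * W x" by simp
  qed
  then show ?thesis using b unfolding admissible_def by auto
qed

lemma G_scale: "G (\<lambda>t. p * \<alpha> t) Y = G \<alpha> (\<lambda>t \<omega>. p * Y t \<omega>) / p"
  unfolding G_def by (simp add: sum_divide_distrib ac_simps)

lemma Asum_scale: "Asum (\<lambda>t. p * \<alpha> t) = Asum \<alpha> / p"
  unfolding Asum_def by (simp add: sum_divide_distrib ac_simps)

lemma D_scale:
  assumes pa: "posa \<alpha>" and p: "p > 0" and ne: "admissible M \<tau> T r W \<noteq> {}"
  shows "D (\<lambda>t. p * \<alpha> t) W = D \<alpha> (\<lambda>\<omega>. p * W \<omega>) / p"
proof -
  have pa': "posa (\<lambda>t. p * \<alpha> t)" using pa p unfolding posa_def by auto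
  have ne': "admissible M \<tau> T r (\<lambda>\<omega>. p * W \<omega>) \<noteq> {}" using ne adm_scale by blast
  have 1: "p * D (\<lambda>t. p * \<alpha> t) W \<le> D \<alpha> (\<lambda>\<omega>. p * W \<omega>)"
  proof (rule D_ge[OF ne'])
    fix Y assume Y: "Y \<in> admissible M \<tau> T r (\<lambda>\<omega>. p * W \<omega>)"
    have "(\<lambda>t \<omega>. (1/p) * Y t \<omega>) \<in> admissible M \<tau> T r (\<lambda>\<omega>. (1/p) * (p * W \<omega>))" by (rule adm_scale[OF Y])
    then have Y': "(\<lambda>t \<omega>. (1/p) * Y t \<omega>) \<in> admissible M \<tau> T r W" using p by simp
    have "D (\<lambda>t. p * \<alpha> t) W \<le> G (\<lambda>t. p * \<alpha> t) (\<lambda>t \<omega>. (1/p) * Y t \<omega>)" by (rule D_le[OF pa' Y'])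
    also have "\<dots> = G \<alpha> Y / p" unfolding G_scale using p by simp
    finally show "p * D (\<lambda>t. p * \<alpha> t) W \<le> G \<alpha> Y" using p by (simp add: field_simps)
  qed
  have 2: "D \<alpha> (\<lambda>\<omega>. p * W \<omega>) / p \<le> D (\<lambda>t. p * \<alpha> t) W"
  proof (rule D_ge[OF ne])
    fix Y assume Y: "Y \<in> admissible M \<tau> T r W"
    have "D \<alpha> (\<lambda>\<omega>. p * W \<omega>) \<le> G \<alpha> (\<lambda>t \<omega>. p * Y t \<omega>)" by (rule D_le[OF pa adm_scale[OF Y]])
    then show "D \<alpha> (\<lambda>\<omega>. p * W \<omega>) / p \<le> G (\<lambda>t. p * \<alpha> t) Y" unfolding G_scale using p by (simp add: divide_right_mono)
  qed
  show ?thesis using 1 2 p by (simp add: field_simps)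
qed

end

locale claim_setting = setting +
  fixes z :: "nat \<Rightarrow> real" and w :: real
  assumes tau_pos: "\<forall>\<omega>\<in>space M. \<tau> \<omega> > 0"
    and haz: "\<forall>t<T. 0 < hazard M \<tau> t \<and> hazard M \<tau> t < 1"
begin

abbreviation Z where "Z \<equiv> claim \<tau> T z"

definition Mz where "Mz = (\<Sum>t\<in>{1..T}. \<bar>z t\<bar>) + \<bar>z (T+1)\<bar>"
definition Hinf where "Hinf = Max (z ` {1..T+1})"
definition EZ where "EZ = (\<integral>\<omega>. Z \<omega> \<partial>M)"
definition Hp where "Hp \<alpha> = indiff_price M \<tau> T r \<alpha> w Z"

lemma Z_meas: "Z \<in> borel_measurable M" using claim_meas filt_meas by blast

lemma Z_bdd: "\<bar>Z \<omega>\<bar> \<le> Mz"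
proof -
  have "\<bar>\<Sum>t\<in>{1..T}. z t * (if real t - 1 < \<tau> \<omega> \<and> \<tau> \<omega> \<le> real t then 1 else 0)\<bar>
     \<le> (\<Sum>t\<in>{1..T}. \<bar>z t * (if real t - 1 < \<tau> \<omega> \<and> \<tau> \<omega> \<le> real t then 1 else 0)\<bar>)"
    by (rule sum_abs)
  also have "\<dots> \<le> (\<Sum>t\<in>{1..T}. \<bar>z t\<bar>)" by (intro sum_mono) auto
  finally have a: "\<bar>\<Sum>t\<in>{1..T}. z t * (if real t - 1 < \<tau> \<omega> \<and> \<tau> \<omega> \<le> real t then 1 else 0)\<bar> \<le> (\<Sum>t\<in>{1..T}. \<bar>z t\<bar>)" .
  have b: "\<bar>z (T + 1) * (if real T < \<tau> \<omega> then 1 else 0)\<bar> \<le> \<bar>z (T+1)\<bar>" by auto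
  show ?thesis unfolding claim_def Mz_def using a b abs_triangle_ineq by (smt (verit))
qed

lemma Mz_nonneg: "Mz \<ge> 0" unfolding Mz_def by (intro add_nonneg_nonneg sum_nonneg) auto

lemma Z_interval:
  assumes k: "k \<in> {1..T}" and i: "real k - 1 < \<tau> \<omega>" "\<tau> \<omega> \<le> real k"
  shows "Z \<omega> = z k"
proof -
  have c: "(real t - 1 < \<tau> \<omega> \<and> \<tau> \<omega> \<le> real t) \<longleftrightarrow> t = k" for t :: nat
  proof
    assume h: "real t - 1 < \<tau> \<omega> \<and> \<tau> \<omega> \<le> real t"
    show "t = k"
    proof (rule ccontr)
      assume "t \<noteq> k"
      then have "t + 1 \<le> k \<or> k + 1 \<le> t" by arith
      then have "real t + 1 \<le> real k \<or> real k + 1 \<le> real t" by (metis of_nat_1 of_nat_add of_nat_le_iff)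
      then show False using h i by linarith
    qed
  qed (use i in auto)
  have "(\<Sum>t\<in>{1..T}. z t * (if real t - 1 < \<tau> \<omega> \<and> \<tau> \<omega> \<le> real t then 1 else 0))
      = (\<Sum>t\<in>{1..T}. if t = k then z t else 0)" using c by (intro sum.cong) auto
  also have "\<dots> = z k" using k by simp
  finally show ?thesis unfolding claim_def using i k by auto
qed

lemma Z_last: "real T < \<tau> \<omega> \<Longrightarrow> Z \<omega> = z (T + 1)"
  unfolding claim_def by (auto intro!: sum.neutral)

lemma Z_val: assumes "\<tau> \<omega> > 0" shows "\<exists>k\<in>{1..T+1}. Z \<omega> = z k"
proof (cases "real T < \<tau> \<omega>")
  case True then show ?thesis using Z_last by auto
next
  case False
  define k where "k = nat \<lceil>\<tau> \<omega>\<rceil>"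
  have "of_int \<lceil>\<tau> \<omega>\<rceil> \<ge> \<tau> \<omega>" by (rule le_of_int_ceiling)
  then have "of_int \<lceil>\<tau> \<omega>\<rceil> > (0::real)" using assms by linarith
  then have "\<lceil>\<tau> \<omega>\<rceil> \<ge> 1" by simp
  then have rk: "real k = of_int \<lceil>\<tau> \<omega>\<rceil>" unfolding k_def by simp
  have k1: "real k - 1 < \<tau> \<omega>" "\<tau> \<omega> \<le> real k" unfolding rk by linarith+
  have "real k \<ge> 1" using rk \<open>\<lceil>\<tau> \<omega>\<rceil> \<ge> 1\<close> by simp
  then have "k \<ge> 1" by simp
  moreover have "real k < real (T + 1)" using k1 False by simp
  then have "k < T + 1" by (simp only: of_nat_less_iff)
  then have "k \<le> T" by simp
  ultimately show ?thesis using Z_interval[OF _ k1] by force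
qed

lemma Hinf_ge: "\<omega> \<in> space M \<Longrightarrow> Z \<omega> \<le> Hinf"
  using Z_val[of \<omega>] tau_pos unfolding Hinf_def by (auto intro!: Max_ge)

lemma Hinf_attained: "\<exists>k\<in>{1..T+1}. z k = Hinf"
proof -
  have "Hinf \<in> z ` {1..T+1}" unfolding Hinf_def by (intro Max_in) auto
  then show ?thesis by auto
qed


lemma pos_event: "\<exists>S\<in>sets M. measure M S > 0 \<and> (\<forall>\<omega>\<in>S. Z \<omega> = Hinf)"
proof -
  obtain k where k: "k \<in> {1..T+1}" "z k = Hinf" using Hinf_attained by blast
  show ?thesis
  proof (cases "k \<le> T")
    case True
    define S where "S = {\<omega>\<in>space M. real k - 1 < \<tau> \<omega> \<and> \<tau> \<omega> \<le> real k}"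
    have Ss: "S \<in> sets M" unfolding S_def using tau_meas by measurable
    have rk: "real (k - 1) = real k - 1" "real (k - 1) + 1 = real k" using k by (auto simp: of_nat_diff)
    have "k - 1 < T" using True k by auto
    then have "0 < hazard M \<tau> (k - 1)" using haz by auto
    then have "0 < measure M S / measure M {\<omega>\<in>space M. real (k-1) < \<tau> \<omega>}"
      unfolding hazard_def S_def rk by simp
    then have "measure M S > 0" using measure_nonneg[of M S] measure_nonneg[of M "{\<omega>\<in>space M. real (k-1) < \<tau> \<omega>}"]
      by (auto simp: zero_less_divide_iff)
    moreover have "\<forall>\<omega>\<in>S. Z \<omega> = Hinf" using Z_interval[of k] True k unfolding S_def by auto
    ultimately show ?thesis using Ss by blast
  next
    case False
    then have kT: "k = T + 1" using k by auto
    define S where "S = {\<omega>\<in>space M. real T < \<tau> \<omega>}"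
    define N where "N = {\<omega>\<in>space M. real T - 1 < \<tau> \<omega> \<and> \<tau> \<omega> \<le> real T}"
    define Dn where "Dn = {\<omega>\<in>space M. real T - 1 < \<tau> \<omega>}"
    have Ss1: "S \<in> sets M" unfolding S_def using tau_meas by measurable
    have Ss2: "N \<in> sets M" unfolding N_def using tau_meas by measurable
    have rT: "real (T - 1) = real T - 1" "real (T - 1) + 1 = real T" using T1 by (auto simp: of_nat_diff)
    have "T - 1 < T" using T1 by auto
    then have h: "0 < hazard M \<tau> (T - 1)" "hazard M \<tau> (T - 1) < 1" using haz by auto
    have hz: "hazard M \<tau> (T - 1) = measure M N / measure M Dn"
      unfolding hazard_def N_def Dn_def rT(1) by simp
    have n0: "measure M N \<ge> 0" "measure M Dn \<ge> 0" by auto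
    have dpos: "measure M Dn > 0"
    proof (rule ccontr)
      assume "\<not> measure M Dn > 0"
      then have "measure M Dn = 0" using n0 by linarith
      then show False using h(1) hz by simp
    qed
    have "measure M N < measure M Dn"
    proof -
      have "measure M N / measure M Dn < 1" using h(2) hz by simp
      then show ?thesis using dpos by (simp only: divide_less_eq_1_pos)
    qed
    moreover have DnE: "Dn = N \<union> S" unfolding Dn_def N_def S_def by auto
    have "N \<inter> S = {}" unfolding N_def S_def by auto
    then have "measure M (N \<union> S) = measure M N + measure M S"
      using Ss1 Ss2 by (intro finite_measure_Union) 
    then have "measure M Dn = measure M N + measure M S" by (simp only: DnE)
    ultimately have "measure M S > 0" by linarith
    moreover have "\<forall>\<omega>\<in>S. Z \<omega> = Hinf" using Z_last k kT unfolding S_def by auto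
    ultimately show ?thesis using Ss1 by blast
  qed
qed

lemma adm_negZ: "admissible M \<tau> T r (\<lambda>\<omega>. - Z \<omega>) \<noteq> {}"
proof -
  have m: "(\<lambda>\<omega>. - Z \<omega>) \<in> borel_measurable (filt M \<tau> T)" using claim_meas by (rule borel_measurable_uminus)
  have b: "\<forall>\<omega>\<in>space M. \<bar>- Z \<omega>\<bar> \<le> Mz" using Z_bdd by simp
  have e: "\<forall>\<omega>\<in>space M. - Z \<omega> = (\<lambda>\<omega>. 0::real) \<omega> + (\<Sum>t\<in>{1..T}. (\<lambda>_. 0::real) t) + - Z \<omega>" by simp
  note shift_adm[OF adm0 m b e]
  then show ?thesis by auto
qed

lemma D0: assumes pa: "posa \<alpha>" shows "D \<alpha> (\<lambda>\<omega>. 0) = Asum \<alpha>"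
proof (rule antisym)
  show "D \<alpha> (\<lambda>\<omega>. 0) \<le> Asum \<alpha>" using D_le[OF pa adm0] G0 by simp
  have "Asum \<alpha> * (\<integral>\<omega>. exp (- 0 / Asum \<alpha>) \<partial>M) \<le> D \<alpha> (\<lambda>\<omega>. 0)"
    using adm0 by (intro D_lower[OF pa, where K=0]) auto
  then show "Asum \<alpha> \<le> D \<alpha> (\<lambda>\<omega>. 0)" by (simp add: prob_space)
qed

lemma DZ_low: assumes pa: "posa \<alpha>"
  shows "Asum \<alpha> * (\<integral>\<omega>. exp (Z \<omega> / Asum \<alpha>) \<partial>M) \<le> D \<alpha> (\<lambda>\<omega>. - Z \<omega>)"
  using D_lower[OF pa adm_negZ _ , of Mz] Z_meas Z_bdd by simp

lemma jensenZ: assumes "A > 0" shows "exp (EZ / A) \<le> (\<integral>\<omega>. exp (Z \<omega> / A) \<partial>M)"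
proof -
  have "(\<lambda>\<omega>. Z \<omega> / A) \<in> borel_measurable M" using Z_meas by measurable
  moreover have "\<forall>\<omega>\<in>space M. \<bar>Z \<omega> / A\<bar> \<le> Mz / A" using Z_bdd assms by (auto simp: abs_div intro: divide_right_mono)
  ultimately have "exp (\<integral>\<omega>. Z \<omega> / A \<partial>M) \<le> (\<integral>\<omega>. exp (Z \<omega> / A) \<partial>M)" by (rule jensen_exp)
  then show ?thesis unfolding EZ_def by simp
qed

lemma DZ_pos: assumes pa: "posa \<alpha>" shows "D \<alpha> (\<lambda>\<omega>. - Z \<omega>) \<ge> Asum \<alpha> * exp (EZ / Asum \<alpha>)"
  "D \<alpha> (\<lambda>\<omega>. - Z \<omega>) > 0"
proof -
  have A: "Asum \<alpha> > 0" using Asum_pos[OF pa] .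
  show "D \<alpha> (\<lambda>\<omega>. - Z \<omega>) \<ge> Asum \<alpha> * exp (EZ / Asum \<alpha>)"
    using DZ_low[OF pa] jensenZ[OF A] A by (smt (verit) mult_left_mono)
  then show "D \<alpha> (\<lambda>\<omega>. - Z \<omega>) > 0" using A by (smt (verit) exp_gt_zero mult_pos_pos)
qed

lemma Hform: assumes pa: "posa \<alpha>"
  shows "Hp \<alpha> = Asum \<alpha> * ln (D \<alpha> (\<lambda>\<omega>. - Z \<omega>) / Asum \<alpha>)"
proof -
  define A where "A = Asum \<alpha>"
  define DZ where "DZ = D \<alpha> (\<lambda>\<omega>. - Z \<omega>)"
  have A: "A > 0" using Asum_pos[OF pa] A_def by simp
  have DZ: "DZ > 0" using DZ_pos[OF pa] DZ_def by simp
  have vh: "value_fun M \<tau> T r \<alpha> (\<lambda>\<omega>. w + h - Z \<omega>) = A - exp (- (w + h) / A) * DZ" for h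
  proof -
    have W': "\<forall>\<omega>\<in>space M. w + h - Z \<omega> = - Z \<omega> + (w + h)" by simp
    note sh = D_shift_eq[OF pa adm_negZ W']
    show ?thesis using value_fun_eq[OF pa sh(2)] sh(1) unfolding A_def DZ_def by simp
  qed
  have vw: "value_fun M \<tau> T r \<alpha> (\<lambda>\<omega>. w) = A - exp (- w / A) * A"
  proof -
    have W': "\<forall>\<omega>\<in>space M. w = 0 + w" by simp
    have ne0: "admissible M \<tau> T r (\<lambda>\<omega>. 0) \<noteq> {}" using adm0 by auto
    note sh = D_shift_eq[OF pa ne0 W']
    show ?thesis using value_fun_eq[OF pa sh(2)] sh(1) D0[OF pa] unfolding A_def by simp
  qed
  have eqv: "value_fun M \<tau> T r \<alpha> (\<lambda>\<omega>. w + h - Z \<omega>) = value_fun M \<tau> T r \<alpha> (\<lambda>\<omega>. w)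
      \<longleftrightarrow> h = A * ln (DZ / A)" for h
  proof -
    have "value_fun M \<tau> T r \<alpha> (\<lambda>\<omega>. w + h - Z \<omega>) = value_fun M \<tau> T r \<alpha> (\<lambda>\<omega>. w)
        \<longleftrightarrow> exp (- w / A) * (exp (- h / A) * DZ) = exp (- w / A) * A"
    proof -
      have "exp (- (w + h) / A) = exp (- w / A) * exp (- h / A)" by (simp add: diff_divide_distrib flip: exp_add)
      then show ?thesis unfolding vh vw by (simp add: mult.assoc)
    qed
    also have "\<dots> \<longleftrightarrow> exp (- h / A) * DZ = A" by simp
    also have "\<dots> \<longleftrightarrow> exp (- h / A) = A / DZ" using DZ by (simp add: field_simps)
    also have "\<dots> \<longleftrightarrow> - h / A = ln (A / DZ)" using A DZ by (metis divide_pos_pos exp_ln ln_exp)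
    also have "\<dots> \<longleftrightarrow> h = A * ln (DZ / A)" using A DZ by (auto simp: ln_div field_simps)
    finally show ?thesis .
  qed
  show ?thesis unfolding Hp_def indiff_price_def A_def[symmetric] DZ_def[symmetric] eqv by simp
qed


lemma EZ_bdd: "\<bar>EZ\<bar> \<le> Mz"
proof -
  have i: "integrable M Z" using Z_meas Z_bdd by (intro intg_bdd[where C=Mz]) auto
  have "EZ \<le> (\<integral>\<omega>. Mz \<partial>M)" unfolding EZ_def using i Z_bdd abs_le_D1 by (intro integral_mono) auto
  moreover have "(\<integral>\<omega>. - Mz \<partial>M) \<le> EZ" unfolding EZ_def using i Z_bdd abs_le_D2 by (intro integral_mono) (auto, smt (verit))
  ultimately show ?thesis by (simp add: prob_space)
qed

lemma bound_a: assumes pa: "posa \<alpha>" shows "EZ \<le> Hp \<alpha>" "Hp \<alpha> \<le> Hinf"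
proof -
  define A where "A = Asum \<alpha>"
  define DZ where "DZ = D \<alpha> (\<lambda>\<omega>. - Z \<omega>)"
  have A: "A > 0" using Asum_pos[OF pa] A_def by simp
  have H: "Hp \<alpha> = A * ln (DZ / A)" using Hform[OF pa] A_def DZ_def by simp
  have l: "A * exp (EZ / A) \<le> DZ" using DZ_pos[OF pa] A_def DZ_def by simp
  then have "exp (EZ / A) \<le> DZ / A" using A by (simp add: field_simps)
  then have "ln (exp (EZ / A)) \<le> ln (DZ / A)" by (intro ln_mono) auto
  then have "EZ / A \<le> ln (DZ / A)" by simp
  then show "EZ \<le> Hp \<alpha>" unfolding H using A by (simp add: field_simps)
  have ne0: "admissible M \<tau> T r (\<lambda>\<omega>. 0) \<noteq> {}" using adm0 by auto
  have m: "(\<lambda>\<omega>. Hinf - Z \<omega>) \<in> borel_measurable (filt M \<tau> T)" using claim_meas by measurable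
  have b: "\<forall>\<omega>\<in>space M. \<bar>Hinf - Z \<omega>\<bar> \<le> \<bar>Hinf\<bar> + Mz" using Z_bdd by (smt (verit))
  have nn: "\<forall>\<omega>\<in>space M. Hinf - Z \<omega> \<ge> 0" using Hinf_ge by auto
  have e: "\<forall>\<omega>\<in>space M. - Z \<omega> = 0 + (- Hinf) + (Hinf - Z \<omega>)" by simp
  have "DZ \<le> exp (- (- Hinf) / A) * D \<alpha> (\<lambda>\<omega>. 0)"
    using D_shift(1)[OF pa ne0 m b nn e] unfolding DZ_def A_def .
  then have "DZ \<le> exp (Hinf / A) * A" using D0[OF pa] A_def by simp
  then have "DZ / A \<le> exp (Hinf / A)" using A by (simp add: field_simps)
  moreover have "DZ / A > 0" using DZ_pos(2)[OF pa] A DZ_def by simp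
  ultimately have "ln (DZ / A) \<le> ln (exp (Hinf / A))" by (intro ln_mono) auto
  then have "ln (DZ / A) \<le> Hinf / A" by simp
  then show "Hp \<alpha> \<le> Hinf" unfolding H using A by (simp add: field_simps)
qed


lemma bound_b: assumes pa: "posa \<alpha>" and small: "\<alpha> T * (2 * Mz) \<le> 1"
  shows "Hp \<alpha> \<le> EZ + 4 * Mz\<^sup>2 * \<alpha> T"
proof -
  define A where "A = Asum \<alpha>"
  define DZ where "DZ = D \<alpha> (\<lambda>\<omega>. - Z \<omega>)"
  define aT where "aT = \<alpha> T"
  have A: "A > 0" using Asum_pos[OF pa] A_def by simp
  have TT: "T \<in> {1..T}" using T1 by auto
  have aT: "aT > 0" using pa TT unfolding posa_def aT_def by auto
  have H: "Hp \<alpha> = A * ln (DZ / A)" using Hform[OF pa] A_def DZ_def by simp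
  have DZp: "DZ > 0" using DZ_pos(2)[OF pa] DZ_def by simp
  define a where "a t = - EZ / (\<alpha> t * A)" for t
  have suma: "(\<Sum>t\<in>{1..T}. a t) = - EZ"
  proof -
    have "(\<Sum>t\<in>{1..T}. a t) = - EZ / A * (\<Sum>t\<in>{1..T}. 1 / \<alpha> t)"
      unfolding a_def sum_distrib_left by (intro sum.cong) (auto simp: field_simps)
    then show ?thesis using A unfolding A_def Asum_def by simp
  qed
  have m: "(\<lambda>\<omega>. EZ - Z \<omega>) \<in> borel_measurable (filt M \<tau> T)" using claim_meas by measurable
  have b: "\<forall>\<omega>\<in>space M. \<bar>EZ - Z \<omega>\<bar> \<le> \<bar>EZ\<bar> + Mz" using Z_bdd by (smt (verit))
  have e: "\<forall>\<omega>\<in>space M. - Z \<omega> = (\<lambda>\<omega>. 0::real) \<omega> + (\<Sum>t\<in>{1..T}. a t) + (EZ - Z \<omega>)" using suma by simp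
  note Y' = shift_adm[OF adm0 m b e]
  have "DZ \<le> G \<alpha> (\<lambda>t \<omega>. 0 + disc r t * (a t + (if t = T then EZ - Z \<omega> else 0)))"
    unfolding DZ_def by (rule D_le[OF pa Y'])
  also have "\<dots> = (\<Sum>t\<in>{1..T}. exp (- \<alpha> t * a t) *
        (\<integral>\<omega>. exp (- \<alpha> t * (0 / disc r t) - \<alpha> t * (if t = T then EZ - Z \<omega> else 0)) \<partial>M) / \<alpha> t)"
    by (rule G_shift)
  also have "\<dots> = (\<Sum>t\<in>{1..T}. exp (EZ / A) * (if t = T then (\<integral>\<omega>. exp (aT * (Z \<omega> - EZ)) \<partial>M) else 1) / \<alpha> t)"
  proof (intro sum.cong refl)
    fix t assume t: "t \<in> {1..T}"
    have at: "\<alpha> t > 0" using pa t unfolding posa_def by auto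
    have ea: "exp (- \<alpha> t * a t) = exp (EZ / A)" using at A unfolding a_def by (simp add: field_simps)
    have "(\<integral>\<omega>. exp (- \<alpha> t * (0 / disc r t) - \<alpha> t * (if t = T then EZ - Z \<omega> else 0)) \<partial>M)
        = (if t = T then (\<integral>\<omega>. exp (aT * (Z \<omega> - EZ)) \<partial>M) else 1)"
    proof (cases "t = T")
      case True
      have "(\<lambda>\<omega>. exp (- \<alpha> t * (0 / disc r t) - \<alpha> t * (if t = T then EZ - Z \<omega> else 0))) = (\<lambda>\<omega>. exp (aT * (Z \<omega> - EZ)))"
        using True unfolding aT_def by (auto simp: algebra_simps)
      then show ?thesis using True by simp
    next
      case False then show ?thesis by (simp add: prob_space)
    qed
    then show "exp (- \<alpha> t * a t) * (\<integral>\<omega>. exp (- \<alpha> t * (0 / disc r t) - \<alpha> t * (if t = T then EZ - Z \<omega> else 0)) \<partial>M) / \<alpha> t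
      = exp (EZ / A) * (if t = T then (\<integral>\<omega>. exp (aT * (Z \<omega> - EZ)) \<partial>M) else 1) / \<alpha> t" using ea by simp
  qed
  finally have DZle: "DZ \<le> (\<Sum>t\<in>{1..T}. exp (EZ / A) * (if t = T then (\<integral>\<omega>. exp (aT * (Z \<omega> - EZ)) \<partial>M) else 1) / \<alpha> t)" .
  define I where "I = (\<integral>\<omega>. exp (aT * (Z \<omega> - EZ)) \<partial>M)"
  have sumeq: "(\<Sum>t\<in>{1..T}. exp (EZ / A) * (if t = T then I else 1) / \<alpha> t) = exp (EZ / A) * (A + (I - 1) / aT)"
  proof -
    have "(\<Sum>t\<in>{1..T}. exp (EZ / A) * (if t = T then I else 1) / \<alpha> t)
        = (\<Sum>t\<in>{1..T}. exp (EZ / A) * (1 / \<alpha> t) + (if t = T then exp (EZ / A) * ((I - 1) / \<alpha> t) else 0))"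
      using aT unfolding aT_def by (intro sum.cong) (auto simp: field_simps)
    also have "\<dots> = exp (EZ / A) * A + exp (EZ / A) * ((I - 1) / aT)"
      unfolding sum.distrib sum_distrib_left[symmetric] using TT unfolding A_def Asum_def aT_def by simp
    finally show ?thesis by (simp add: algebra_simps)
  qed
  have Zi: "integrable M Z" using Z_meas Z_bdd by (intro intg_bdd[where C=Mz]) auto
  have Ibd: "I \<le> 1 + (aT * (2 * Mz))\<^sup>2"
  proof -
    have um: "(\<lambda>\<omega>. aT * (Z \<omega> - EZ)) \<in> borel_measurable M" using Z_meas by measurable
    have ub: "\<forall>\<omega>\<in>space M. \<bar>aT * (Z \<omega> - EZ)\<bar> \<le> aT * (2 * Mz)"
    proof
      fix \<omega> assume "\<omega> \<in> space M"
      have "\<bar>Z \<omega> - EZ\<bar> \<le> 2 * Mz" using Z_bdd[of \<omega>] EZ_bdd by linarith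
      then show "\<bar>aT * (Z \<omega> - EZ)\<bar> \<le> aT * (2 * Mz)" using aT by (simp add: abs_mult)
    qed
    have pw: "exp (aT * (Z \<omega> - EZ)) \<le> 1 + aT * (Z \<omega> - EZ) + (aT * (2 * Mz))\<^sup>2" if w: "\<omega> \<in> space M" for \<omega>
    proof -
      have u1: "\<bar>aT * (Z \<omega> - EZ)\<bar> \<le> 1" using ub w small unfolding aT_def by force
      have "(aT * (Z \<omega> - EZ))\<^sup>2 = \<bar>aT * (Z \<omega> - EZ)\<bar>\<^sup>2" by simp
      also have "\<dots> \<le> (aT * (2 * Mz))\<^sup>2" using ub w by (intro power_mono) auto
      finally show ?thesis using exp_sq_bound[OF u1] by linarith
    qed
    have "I \<le> (\<integral>\<omega>. 1 + aT * (Z \<omega> - EZ) + (aT * (2 * Mz))\<^sup>2 \<partial>M)"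
      unfolding I_def using pw exp_bdd_intg[OF um ub] Zi by (intro integral_mono) auto
    also have "\<dots> = 1 + aT * (EZ - EZ) + (aT * (2 * Mz))\<^sup>2"
      using Zi by (simp add: prob_space EZ_def)
    finally show ?thesis by simp
  qed
  have "(I - 1) / aT \<le> 4 * Mz\<^sup>2 * aT"
  proof -
    have "I - 1 \<le> aT * (4 * Mz\<^sup>2 * aT)" using Ibd by (simp add: power2_eq_square algebra_simps)
    then show ?thesis using aT by (simp add: divide_le_eq mult.commute)
  qed
  define x where "x = 4 * Mz\<^sup>2 * aT / A"
  have x0: "x \<ge> 0" unfolding x_def using aT A by auto
  have "DZ \<le> exp (EZ / A) * (A + 4 * Mz\<^sup>2 * aT)"
    using DZle sumeq \<open>(I - 1) / aT \<le> 4 * Mz\<^sup>2 * aT\<close> unfolding I_def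
    by (smt (verit) exp_gt_zero mult_left_mono)
  then have "DZ / A \<le> exp (EZ / A) * (1 + x)" using A unfolding x_def by (simp add: field_simps)
  then have "ln (DZ / A) \<le> ln (exp (EZ / A) * (1 + x))" using DZp A by (intro ln_mono) auto
  also have "\<dots> = EZ / A + ln (1 + x)" using x0 by (simp add: ln_mult)
  also have "\<dots> \<le> EZ / A + x" using ln_add_one_self_le_self[OF x0] by simp
  finally have "A * ln (DZ / A) \<le> A * (EZ / A + x)" using A by (intro mult_left_mono) auto
  also have "\<dots> = EZ + 4 * Mz\<^sup>2 * \<alpha> T" unfolding x_def aT_def using A by (simp add: field_simps)
  finally show ?thesis unfolding H .
qed


lemma bound_c: "\<exists>\<pi>>0. \<pi> \<le> 1 \<and> (\<forall>\<alpha>. posa \<alpha> \<longrightarrow> Hinf + Asum \<alpha> * ln \<pi> \<le> Hp \<alpha>)"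
proof -
  obtain S where S: "S \<in> sets M" "measure M S > 0" "\<forall>\<omega>\<in>S. Z \<omega> = Hinf" using pos_event by blast
  have Ssub: "S \<subseteq> space M" using S(1) sets.sets_into_space by auto
  have "\<forall>\<alpha>. posa \<alpha> \<longrightarrow> Hinf + Asum \<alpha> * ln (measure M S) \<le> Hp \<alpha>"
  proof (intro allI impI)
    fix \<alpha> assume pa: "posa \<alpha>"
    define A where "A = Asum \<alpha>"
    define DZ where "DZ = D \<alpha> (\<lambda>\<omega>. - Z \<omega>)"
    have A: "A > 0" using Asum_pos[OF pa] A_def by simp
    have H: "Hp \<alpha> = A * ln (DZ / A)" using Hform[OF pa] A_def DZ_def by simp
    have um: "(\<lambda>\<omega>. Z \<omega> / A) \<in> borel_measurable M" using Z_meas by measurable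
    have ub: "\<forall>\<omega>\<in>space M. \<bar>Z \<omega> / A\<bar> \<le> Mz / A" using Z_bdd A by (auto simp: abs_div intro: divide_right_mono)
    have i1: "integrable M (\<lambda>\<omega>. exp (Hinf / A) * indicator S \<omega>)"
      using S(1) by (intro integrable_mult_right integrable_real_indicator) (auto simp: less_top[symmetric])
    have "(\<integral>\<omega>. exp (Hinf / A) * indicator S \<omega> \<partial>M) \<le> (\<integral>\<omega>. exp (Z \<omega> / A) \<partial>M)"
      using i1 exp_bdd_intg[OF um ub] S(3) by (intro integral_mono) (auto simp: indicator_def)
    moreover have "(\<integral>\<omega>. exp (Hinf / A) * indicator S \<omega> \<partial>M) = exp (Hinf / A) * measure M S"
      using Ssub by (simp add: Int_absorb2)
    ultimately have "exp (Hinf / A) * measure M S \<le> (\<integral>\<omega>. exp (Z \<omega> / A) \<partial>M)" by simp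
    then have "A * (exp (Hinf / A) * measure M S) \<le> DZ"
      using DZ_low[OF pa] A unfolding DZ_def A_def by (smt (verit) mult_left_mono)
    then have "measure M S * exp (Hinf / A) \<le> DZ / A" using A by (simp add: field_simps)
    then have "ln (measure M S * exp (Hinf / A)) \<le> ln (DZ / A)" using S(2) by (intro ln_mono) auto
    then have "ln (measure M S) + Hinf / A \<le> ln (DZ / A)" using S(2) by (simp add: ln_mult)
    then have "A * (ln (measure M S) + Hinf / A) \<le> A * ln (DZ / A)" using A by (intro mult_left_mono) auto
    moreover have "A * (ln (measure M S) + Hinf / A) = Hinf + A * ln (measure M S)" using A by (simp add: field_simps)
    ultimately show "Hinf + Asum \<alpha> * ln (measure M S) \<le> Hp \<alpha>" unfolding H A_def[symmetric] by linarith
  qed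
  moreover have "measure M S \<le> 1" by (rule prob_le_1)
  ultimately show ?thesis using S(2) by blast
qed

lemma phi_pos: assumes pa: "posa \<alpha>" shows "D \<alpha> (\<lambda>\<omega>. p * - Z \<omega>) > 0"
proof -
  define A where "A = Asum \<alpha>"
  have A: "A > 0" using Asum_pos[OF pa] A_def by simp
  have ne: "admissible M \<tau> T r (\<lambda>\<omega>. p * - Z \<omega>) \<noteq> {}" using adm_negZ adm_scale by blast
  have m: "(\<lambda>\<omega>. p * - Z \<omega>) \<in> borel_measurable M" using Z_meas by measurable
  have b: "\<forall>\<omega>\<in>space M. \<bar>p * - Z \<omega>\<bar> \<le> \<bar>p\<bar> * Mz" using Z_bdd by (auto simp: abs_mult intro: mult_left_mono)
  have l: "A * (\<integral>\<omega>. exp (- (p * - Z \<omega>) / A) \<partial>M) \<le> D \<alpha> (\<lambda>\<omega>. p * - Z \<omega>)"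
    using D_lower[OF pa ne m b] unfolding A_def .
  have um: "(\<lambda>\<omega>. - (p * - Z \<omega>) / A) \<in> borel_measurable M" using Z_meas by measurable
  have ub: "\<forall>\<omega>\<in>space M. \<bar>- (p * - Z \<omega>) / A\<bar> \<le> \<bar>p\<bar> * Mz / A" using b A by (auto simp: abs_div intro: divide_right_mono)
  have "0 < exp (\<integral>\<omega>. - (p * - Z \<omega>) / A \<partial>M)" by simp
  also have "\<dots> \<le> (\<integral>\<omega>. exp (- (p * - Z \<omega>) / A) \<partial>M)" by (rule jensen_exp[OF um ub])
  finally show ?thesis using l A by (smt (verit) mult_pos_pos)
qed

lemma phi_lip: assumes pa: "posa \<alpha>"
  shows "D \<alpha> (\<lambda>\<omega>. q * - Z \<omega>) \<le> exp (\<bar>q - p\<bar> * Mz / Asum \<alpha>) * D \<alpha> (\<lambda>\<omega>. p * - Z \<omega>)"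
proof -
  have ne: "admissible M \<tau> T r (\<lambda>\<omega>. p * - Z \<omega>) \<noteq> {}" using adm_negZ adm_scale by blast
  have m: "(\<lambda>\<omega>. \<bar>q - p\<bar> * Mz - (q - p) * Z \<omega>) \<in> borel_measurable (filt M \<tau> T)" using claim_meas by measurable
  have b: "\<forall>\<omega>\<in>space M. \<bar>\<bar>q - p\<bar> * Mz - (q - p) * Z \<omega>\<bar> \<le> 2 * (\<bar>q - p\<bar> * Mz)"
  proof
    fix \<omega> assume "\<omega> \<in> space M"
    have "\<bar>(q - p) * Z \<omega>\<bar> \<le> \<bar>q - p\<bar> * Mz" using Z_bdd[of \<omega>] by (simp add: abs_mult mult_left_mono)
    then show "\<bar>\<bar>q - p\<bar> * Mz - (q - p) * Z \<omega>\<bar> \<le> 2 * (\<bar>q - p\<bar> * Mz)" by linarith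
  qed
  have nn: "\<forall>\<omega>\<in>space M. \<bar>q - p\<bar> * Mz - (q - p) * Z \<omega> \<ge> 0"
  proof
    fix \<omega> assume "\<omega> \<in> space M"
    have "\<bar>(q - p) * Z \<omega>\<bar> \<le> \<bar>q - p\<bar> * Mz" using Z_bdd[of \<omega>] by (simp add: abs_mult mult_left_mono)
    then show "\<bar>q - p\<bar> * Mz - (q - p) * Z \<omega> \<ge> 0" by linarith
  qed
  have e: "\<forall>\<omega>\<in>space M. q * - Z \<omega> = p * - Z \<omega> + (- (\<bar>q - p\<bar> * Mz)) + (\<bar>q - p\<bar> * Mz - (q - p) * Z \<omega>)"
    by (simp add: algebra_simps)
  show ?thesis using D_shift(1)[OF pa ne m b nn e] by simp
qed

lemma Hp_scale: assumes pa: "posa \<alpha>" and p: "p > 0"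
  shows "Hp (\<lambda>t. p * \<alpha> t) = Asum \<alpha> / p * ln (D \<alpha> (\<lambda>\<omega>. p * - Z \<omega>) / Asum \<alpha>)"
proof -
  have pa': "posa (\<lambda>t. p * \<alpha> t)" using pa p unfolding posa_def by auto
  have A: "Asum \<alpha> > 0" using Asum_pos[OF pa] .
  have "Hp (\<lambda>t. p * \<alpha> t) = Asum \<alpha> / p * ln ((D \<alpha> (\<lambda>\<omega>. p * - Z \<omega>) / p) / (Asum \<alpha> / p))"
    using Hform[OF pa'] D_scale[OF pa p adm_negZ] Asum_scale by simp
  also have "(D \<alpha> (\<lambda>\<omega>. p * - Z \<omega>) / p) / (Asum \<alpha> / p) = D \<alpha> (\<lambda>\<omega>. p * - Z \<omega>) / Asum \<alpha>"
    using p by simp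
  finally show ?thesis .
qed

lemma Hp_cont: assumes pa: "posa \<alpha>" and p1: "p1 > 0"
  shows "continuous_on {p1..p2} (\<lambda>p. Hp (\<lambda>t. p * \<alpha> t))"
proof -
  define A where "A = Asum \<alpha>"
  have A: "A > 0" using Asum_pos[OF pa] A_def by simp
  define \<psi> where "\<psi> p = ln (D \<alpha> (\<lambda>\<omega>. p * - Z \<omega>) / A)" for p
  have lip: "(Mz / A)-lipschitz_on UNIV \<psi>"
  proof (rule lipschitz_onI)
    show "0 \<le> Mz / A" using Mz_nonneg A by simp
    fix x y :: real
    have one: "\<psi> q - \<psi> p \<le> Mz / A * \<bar>q - p\<bar>" for p q
    proof -
      have pp: "D \<alpha> (\<lambda>\<omega>. p * - Z \<omega>) > 0" "D \<alpha> (\<lambda>\<omega>. q * - Z \<omega>) > 0" using phi_pos[OF pa] by auto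
      have "D \<alpha> (\<lambda>\<omega>. q * - Z \<omega>) / A \<le> exp (\<bar>q - p\<bar> * Mz / A) * (D \<alpha> (\<lambda>\<omega>. p * - Z \<omega>) / A)"
        using phi_lip[OF pa, of q p] A unfolding A_def by (simp add: divide_right_mono)
      then have "\<psi> q \<le> ln (exp (\<bar>q - p\<bar> * Mz / A) * (D \<alpha> (\<lambda>\<omega>. p * - Z \<omega>) / A))"
        unfolding \<psi>_def using pp A by (intro ln_mono) auto
      also have "\<dots> = ln (exp (\<bar>q - p\<bar> * Mz / A)) + ln (D \<alpha> (\<lambda>\<omega>. p * - Z \<omega>) / A)"
        using pp A by (intro ln_mult_pos) auto
      also have "\<dots> = \<bar>q - p\<bar> * Mz / A + \<psi> p" unfolding \<psi>_def by (simp only: ln_exp)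
      finally have "\<psi> q \<le> \<bar>q - p\<bar> * Mz / A + \<psi> p" .
      moreover have "\<bar>q - p\<bar> * Mz / A = Mz / A * \<bar>q - p\<bar>" by simp
      ultimately show ?thesis by linarith
    qed
    have "\<bar>\<psi> x - \<psi> y\<bar> \<le> Mz / A * \<bar>x - y\<bar>" using one[of x y] one[of y x] by (simp add: abs_minus_commute)
    then show "dist (\<psi> x) (\<psi> y) \<le> Mz / A * dist x y" by (simp add: dist_real_def)
  qed
  have c\<psi>: "continuous_on {p1..p2} \<psi>"
    using lipschitz_on_continuous_on[OF lip] continuous_on_subset by blast
  have "continuous_on {p1..p2} (\<lambda>p. A / p * \<psi> p)"
    using p1 by (intro continuous_on_mult continuous_on_divide c\<psi> continuous_on_const continuous_on_id) auto
  moreover have "\<forall>p\<in>{p1..p2}. Hp (\<lambda>t. p * \<alpha> t) = A / p * \<psi> p"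
    using Hp_scale[OF pa] p1 unfolding A_def \<psi>_def by auto
  ultimately show ?thesis using continuous_on_cong by (metis (no_types, lifting))
qed

end


lemma help2: fixes a c e :: real
  assumes "0 < a" "0 \<le> c" "a \<le> e / (c + 1)" shows "c * a < e"
proof -
  have "a * (c + 1) \<le> e" using assms by (simp add: le_divide_eq)
  then show ?thesis using assms(1) by (simp add: algebra_simps)
qed

lemma help3: fixes A L d p :: real
  assumes "0 < A" "0 \<le> L" "0 < d" "A * (L + 1) / d < p" shows "A / p * L < d" "p > 0"
proof -
  have "A * (L + 1) / d > 0" using assms by simp
  then show p: "p > 0" using assms by linarith
  have "A * (L + 1) < p * d" using assms(3,4) by (simp add: divide_less_eq)
  then have "A * L < p * d" using assms(1) by (simp add: algebra_simps)
  then show "A / p * L < d" using p by (simp add: field_simps)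
qed

theorem theorem4p6:
  fixes M :: "'a measure" and \<tau> :: "'a \<Rightarrow> real" and T :: nat
    and r :: "nat \<Rightarrow> real" and z :: "nat \<Rightarrow> real" and w :: real
  assumes "prob_space M"
    and "\<tau> \<in> borel_measurable M"
    and "\<forall>\<omega>\<in>space M. \<tau> \<omega> > 0"
    and "\<forall>s\<ge>0. measure M {\<omega>\<in>space M. \<tau> \<omega> = s} = 0"
    and "T \<ge> 1"
    and "\<forall>k\<in>{1..T}. r k \<ge> 0"
    and "\<forall>t<T. 0 < hazard M \<tau> t \<and> hazard M \<tau> t < 1"
  defines "Z \<equiv> claim \<tau> T z"
    and "H \<equiv> (\<lambda>\<alpha>. indiff_price M \<tau> T r \<alpha> w (claim \<tau> T z))"
    and "Hinf \<equiv> Max (z ` {1..T+1})"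
  shows
    "(\<forall>\<alpha>. (\<forall>t\<in>{1..T}. 0 < \<alpha> t) \<longrightarrow>
          integral\<^sup>L M Z \<le> H \<alpha> \<and> H \<alpha> \<le> Hinf)
   \<and> (\<forall>\<epsilon>>0. \<exists>\<delta>>0. \<forall>\<alpha>. (\<forall>t\<in>{1..T}. 0 < \<alpha> t \<and> \<alpha> t < \<delta>) \<longrightarrow>
          \<bar>H \<alpha> - integral\<^sup>L M Z\<bar> < \<epsilon>)
   \<and> (\<forall>\<epsilon>>0. \<exists>K. \<forall>\<alpha>. (\<forall>t\<in>{1..T}. K < \<alpha> t) \<longrightarrow>
          \<bar>H \<alpha> - Hinf\<bar> < \<epsilon>)
   \<and> (\<forall>\<pi> \<alpha>. integral\<^sup>L M Z < \<pi> \<and> \<pi> < Hinf \<and> (\<forall>t\<in>{1..T}. 0 < \<alpha> t) \<longrightarrow>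
          (\<exists>p>0. \<pi> = H (\<lambda>t. p * \<alpha> t)))"
proof -
  interpret cs: claim_setting M \<tau> T r z w
    unfolding claim_setting_def setting_def claim_setting_axioms_def setting_axioms_def using assms by auto
  have HH: "H \<alpha> = cs.Hp \<alpha>" for \<alpha> unfolding H_def cs.Hp_def by simp
  have Hi: "Hinf = cs.Hinf" unfolding Hinf_def cs.Hinf_def by simp
  have EZ: "integral\<^sup>L M Z = cs.EZ" unfolding Z_def cs.EZ_def by simp
  have pos: "(\<forall>t\<in>{1..T}. 0 < \<alpha> t) \<longleftrightarrow> cs.posa \<alpha>" for \<alpha> unfolding cs.posa_def by simp
  have TT: "T \<in> {1..T}" using assms(5) by auto
  have Mz0: "cs.Mz \<ge> 0" by (rule cs.Mz_nonneg)
  obtain \<pi>0 where \<pi>0: "\<pi>0 > 0" "\<pi>0 \<le> 1" "\<forall>\<alpha>. cs.posa \<alpha> \<longrightarrow> cs.Hinf + cs.Asum \<alpha> * ln \<pi>0 \<le> cs.Hp \<alpha>"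
    using cs.bound_c by blast
  define L where "L = - ln \<pi>0"
  have L0: "L \<ge> 0" unfolding L_def using \<pi>0 by simp
  have partA: "\<forall>\<alpha>. (\<forall>t\<in>{1..T}. 0 < \<alpha> t) \<longrightarrow> integral\<^sup>L M Z \<le> H \<alpha> \<and> H \<alpha> \<le> Hinf"
    unfolding HH Hi EZ pos using cs.bound_a by auto
  have partB: "\<forall>\<epsilon>>0. \<exists>\<delta>>0. \<forall>\<alpha>. (\<forall>t\<in>{1..T}. 0 < \<alpha> t \<and> \<alpha> t < \<delta>) \<longrightarrow> \<bar>H \<alpha> - integral\<^sup>L M Z\<bar> < \<epsilon>"
  proof (intro allI impI)
    fix \<epsilon> :: real assume e: "\<epsilon> > 0"
    define \<delta> where "\<delta> = min (1 / (2 * cs.Mz + 1)) (\<epsilon> / (4 * cs.Mz\<^sup>2 + 1))"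
    have d: "\<delta> > 0" unfolding \<delta>_def using e Mz0 by (simp add: add_nonneg_pos)
    have "\<forall>\<alpha>. (\<forall>t\<in>{1..T}. 0 < \<alpha> t \<and> \<alpha> t < \<delta>) \<longrightarrow> \<bar>H \<alpha> - integral\<^sup>L M Z\<bar> < \<epsilon>"
    proof (intro allI impI)
      fix \<alpha> :: "nat \<Rightarrow> real" assume a: "\<forall>t\<in>{1..T}. 0 < \<alpha> t \<and> \<alpha> t < \<delta>"
      then have pa: "cs.posa \<alpha>" unfolding cs.posa_def by auto
      have aT: "0 < \<alpha> T" "\<alpha> T < \<delta>" using a TT by auto
      have "(2 * cs.Mz) * \<alpha> T < 1"
        using help2[of "\<alpha> T" "2 * cs.Mz" 1] aT Mz0 unfolding \<delta>_def by auto
      then have sm: "\<alpha> T * (2 * cs.Mz) \<le> 1" by (simp add: mult.commute)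
      have "4 * cs.Mz\<^sup>2 * \<alpha> T < \<epsilon>"
        using help2[of "\<alpha> T" "4 * cs.Mz\<^sup>2" \<epsilon>] aT unfolding \<delta>_def by auto
      then have "cs.Hp \<alpha> < cs.EZ + \<epsilon>" using cs.bound_b[OF pa sm] by linarith
      moreover have "cs.EZ \<le> cs.Hp \<alpha>" using cs.bound_a[OF pa] by simp
      ultimately show "\<bar>H \<alpha> - integral\<^sup>L M Z\<bar> < \<epsilon>" unfolding HH EZ by linarith
    qed
    then show "\<exists>\<delta>>0. \<forall>\<alpha>. (\<forall>t\<in>{1..T}. 0 < \<alpha> t \<and> \<alpha> t < \<delta>) \<longrightarrow> \<bar>H \<alpha> - integral\<^sup>L M Z\<bar> < \<epsilon>"
      using d by blast
  qed
  have partC: "\<forall>\<epsilon>>0. \<exists>K. \<forall>\<alpha>. (\<forall>t\<in>{1..T}. K < \<alpha> t) \<longrightarrow> \<bar>H \<alpha> - Hinf\<bar> < \<epsilon>"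
  proof (intro allI impI)
    fix \<epsilon> :: real assume e: "\<epsilon> > 0"
    define K where "K = real T * (L + 1) / \<epsilon>"
    have K: "K > 0" unfolding K_def using e L0 assms(5) by simp
    have "\<forall>\<alpha>. (\<forall>t\<in>{1..T}. K < \<alpha> t) \<longrightarrow> \<bar>H \<alpha> - Hinf\<bar> < \<epsilon>"
    proof (intro allI impI)
      fix \<alpha> :: "nat \<Rightarrow> real" assume a: "\<forall>t\<in>{1..T}. K < \<alpha> t"
      then have pa: "cs.posa \<alpha>" unfolding cs.posa_def using K by force
      have Ap: "cs.Asum \<alpha> > 0" by (rule cs.Asum_pos[OF pa])
      have "cs.Asum \<alpha> \<le> (\<Sum>t\<in>{1..T}. 1 / K)" unfolding cs.Asum_def
      proof (intro sum_mono)
        fix t assume "t \<in> {1..T}"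
        then have kt: "K < \<alpha> t" using a by auto
        then have "0 < \<alpha> t * K" using K by simp
        then show "1 / \<alpha> t \<le> 1 / K" using kt by (intro divide_left_mono) auto
      qed
      also have "\<dots> = real T / K" by simp
      also have "\<dots> = \<epsilon> / (L + 1)"
      proof -
        have "real T > 0" "L + 1 > 0" using assms(5) L0 by auto
        then have "real T * (L + 1) > 0" by simp
        then have tp: "real T + L * real T > 0" by (simp add: algebra_simps)
        have "(\<epsilon> * real T + L * (\<epsilon> * real T)) = \<epsilon> * (real T + L * real T)" by (simp add: algebra_simps)
        then have "(\<epsilon> * real T + L * (\<epsilon> * real T)) / (real T + L * real T) = \<epsilon>" using tp by simp
        then show ?thesis unfolding K_def using e \<open>L + 1 > 0\<close> \<open>real T > 0\<close> by (simp add: field_simps)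
      qed
      finally have "L * cs.Asum \<alpha> < \<epsilon>" using help2[OF Ap L0] by simp
      then have "cs.Hinf - cs.Hp \<alpha> < \<epsilon>" using \<pi>0(3) pa unfolding L_def by (smt (verit) mult.commute mult_minus_left)
      moreover have "cs.Hp \<alpha> \<le> cs.Hinf" using cs.bound_a[OF pa] by simp
      ultimately show "\<bar>H \<alpha> - Hinf\<bar> < \<epsilon>" unfolding HH Hi by linarith
    qed
    then show "\<exists>K. \<forall>\<alpha>. (\<forall>t\<in>{1..T}. K < \<alpha> t) \<longrightarrow> \<bar>H \<alpha> - Hinf\<bar> < \<epsilon>" by blast
  qed
  have partD: "\<forall>\<pi> \<alpha>. integral\<^sup>L M Z < \<pi> \<and> \<pi> < Hinf \<and> (\<forall>t\<in>{1..T}. 0 < \<alpha> t) \<longrightarrow> (\<exists>p>0. \<pi> = H (\<lambda>t. p * \<alpha> t))"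
  proof (intro allI impI)
    fix \<pi> :: real and \<alpha> :: "nat \<Rightarrow> real"
    assume h: "integral\<^sup>L M Z < \<pi> \<and> \<pi> < Hinf \<and> (\<forall>t\<in>{1..T}. 0 < \<alpha> t)"
    then have lo: "cs.EZ < \<pi>" and hi: "\<pi> < cs.Hinf" and pa: "cs.posa \<alpha>" unfolding EZ Hi pos by auto
    have aT: "\<alpha> T > 0" using pa TT unfolding cs.posa_def by auto
    have Ap: "cs.Asum \<alpha> > 0" by (rule cs.Asum_pos[OF pa])
    have pap: "cs.posa (\<lambda>t. p * \<alpha> t)" if "p > 0" for p using pa that unfolding cs.posa_def by auto
    define p1 where "p1 = min (1 / (\<alpha> T * (2 * cs.Mz + 1))) ((\<pi> - cs.EZ) / (\<alpha> T * (4 * cs.Mz\<^sup>2 + 1)))"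
    have p1: "p1 > 0" unfolding p1_def using aT Mz0 lo by (simp add: add_nonneg_pos)
    have "(2 * cs.Mz) * (p1 * \<alpha> T) < 1"
    proof (rule help2)
      show "0 < p1 * \<alpha> T" using p1 aT by simp
      show "0 \<le> 2 * cs.Mz" using Mz0 by simp
      have "p1 \<le> 1 / (\<alpha> T * (2 * cs.Mz + 1))" unfolding p1_def by simp
      then have "p1 * \<alpha> T \<le> 1 / (\<alpha> T * (2 * cs.Mz + 1)) * \<alpha> T" using aT by (intro mult_right_mono) auto
      also have "\<dots> = 1 / (2 * cs.Mz + 1)" using aT by simp
      finally show "p1 * \<alpha> T \<le> 1 / (2 * cs.Mz + 1)" .
    qed
    then have sm: "(\<lambda>t. p1 * \<alpha> t) T * (2 * cs.Mz) \<le> 1" by (simp add: mult.commute)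
    have "4 * cs.Mz\<^sup>2 * (p1 * \<alpha> T) < \<pi> - cs.EZ"
    proof (rule help2)
      show "0 < p1 * \<alpha> T" using p1 aT by simp
      show "0 \<le> 4 * cs.Mz\<^sup>2" by simp
      have "p1 \<le> (\<pi> - cs.EZ) / (\<alpha> T * (4 * cs.Mz\<^sup>2 + 1))" unfolding p1_def by simp
      then have "p1 * \<alpha> T \<le> (\<pi> - cs.EZ) / (\<alpha> T * (4 * cs.Mz\<^sup>2 + 1)) * \<alpha> T" using aT by (intro mult_right_mono) auto
      also have "\<dots> = (\<pi> - cs.EZ) / (4 * cs.Mz\<^sup>2 + 1)" using aT by simp
      finally show "p1 * \<alpha> T \<le> (\<pi> - cs.EZ) / (4 * cs.Mz\<^sup>2 + 1)" .
    qed
    then have g1: "cs.Hp (\<lambda>t. p1 * \<alpha> t) \<le> \<pi>" using cs.bound_b[OF pap[OF p1] sm] by simp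
    define p2 where "p2 = p1 + cs.Asum \<alpha> * (L + 1) / (cs.Hinf - \<pi>)"
    have q: "cs.Asum \<alpha> * (L + 1) / (cs.Hinf - \<pi>) < p2" unfolding p2_def using p1 by simp
    note h3 = help3[OF Ap L0 _ q]
    have p2: "p2 > 0" "cs.Asum \<alpha> / p2 * L < cs.Hinf - \<pi>" using h3 hi by auto
    have "cs.Hinf + cs.Asum (\<lambda>t. p2 * \<alpha> t) * ln \<pi>0 \<le> cs.Hp (\<lambda>t. p2 * \<alpha> t)" using \<pi>0(3) pap[OF p2(1)] by auto
    then have g2: "\<pi> \<le> cs.Hp (\<lambda>t. p2 * \<alpha> t)" using p2(2) unfolding cs.Asum_scale L_def by simp
    have p12: "p1 \<le> p2" unfolding p2_def using Ap L0 hi by simp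
    obtain p where p: "p1 \<le> p" "p \<le> p2" "cs.Hp (\<lambda>t. p * \<alpha> t) = \<pi>"
      using IVT'[OF g1 g2 p12 cs.Hp_cont[OF pa p1]] by blast
    then show "\<exists>p>0. \<pi> = H (\<lambda>t. p * \<alpha> t)" unfolding HH using p1 by (intro exI[of _ p]) auto
  qed
  show ?thesis using partA partB partC partD by blast
qed

end
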